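(* For any type $\sigma$, there are countably many regular families of $\sigma$-forests.
   Context: A type $\sigma$ is a finite set of relation symbols with arities; a $\sigma$-structure is a finite set with an $r$-ary relation for each symbol of arity $r$. $\mathrm{Inc}(\mathbf A)$ is the bipartite multigraph with parts $V(\mathbf A)$ and the blocks $(R,(x_1,\dots,x_r))$, $(x_1,\dots,x_r)\in R(\mathbf A)$, with one edge joining $x_i$ to the block for each $i$; $\mathbf A$ is a $\sigma$-forest if $\mathrm{Inc}(\mathbf A)$ has no cycles or parallel edges. $\mathbb F$ is the set of isomorphism classes of $\sigma$-forests, $\mathbb F_{\mathrm r}$ that of rooted $\sigma$-forests $(\mathbf A,a)$. $(\mathbf A,a)+(\mathbf B,b)$: disjoint union with $a,b$ identified as new root; $[(\mathbf A,a)]$ forgets the root. A family $\mathcal O\subseteq\mathbb F$ is regular if there are only finitely many distinct sets $\mathcal O-(\mathbf A,a)=\{(\mathbf B,b)\in\mathbb F_{\mathrm r}:[(\mathbf A,a)+(\mathbf B,b)]\in\mathcal O\}$, $(\mathbf A,a)\in\mathbb F_{\mathrm r}$. *)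

theory Defs
  imports Main "HOL-Library.Countable_Set"
begin

text \<open>A type sigma is given by a finite type 'r of relation symbols together with an
arity function ar :: 'r => nat.  A sigma-structure is represented concretely by a
universe (a finite set of natural numbers) and, for each symbol R, a set of tuples
(lists of length ar R) over the universe.  Isomorphism classes are handled by working
with isomorphism-closed sets of concrete structures.\<close>

type_synonym 'r struc = "nat set \<times> ('r \<Rightarrow> nat list set)"

definition is_struc :: "('r \<Rightarrow> nat) \<Rightarrow> 'r struc \<Rightarrow> bool" where
  "is_struc ar A \<longleftrightarrow> finite (fst A) \<and>
     (\<forall>R. \<forall>t\<in>snd A R. length t = ar R \<and> set t \<subseteq> fst A)"

definition blocks :: "'r struc \<Rightarrow> ('r \<times> nat list) set" where
  "blocks A = {(R, t). t \<in> snd A R}"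

text \<open>Inc(A) has parallel edges iff some block contains a repeated vertex.\<close>
definition no_parallel :: "'r struc \<Rightarrow> bool" where
  "no_parallel A \<longleftrightarrow> (\<forall>b\<in>blocks A. distinct (snd b))"

text \<open>A cycle in the bipartite graph Inc(A) (without parallel edges): distinct vertices
v_0..v_(k-1), k >= 2, and distinct blocks b_0..b_(k-1) such that b_i contains v_i and
v_(i+1 mod k).\<close>
definition has_cycle :: "'r struc \<Rightarrow> bool" where
  "has_cycle A \<longleftrightarrow> (\<exists>vs bs. length vs = length bs \<and> 2 \<le> length vs \<and>
      distinct vs \<and> distinct bs \<and> set bs \<subseteq> blocks A \<and>
      (\<forall>i<length vs. vs ! i \<in> set (snd (bs ! i)) \<and>
                     vs ! ((i + 1) mod length vs) \<in> set (snd (bs ! i))))"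

definition is_forest :: "('r \<Rightarrow> nat) \<Rightarrow> 'r struc \<Rightarrow> bool" where
  "is_forest ar A \<longleftrightarrow> is_struc ar A \<and> no_parallel A \<and> \<not> has_cycle A"

definition rooted_forest :: "('r \<Rightarrow> nat) \<Rightarrow> 'r struc \<Rightarrow> nat \<Rightarrow> bool" where
  "rooted_forest ar A a \<longleftrightarrow> is_forest ar A \<and> a \<in> fst A"

definition struc_iso :: "'r struc \<Rightarrow> 'r struc \<Rightarrow> bool" where
  "struc_iso A B \<longleftrightarrow> (\<exists>f. bij_betw f (fst A) (fst B) \<and> (\<forall>R. snd B R = map f ` snd A R))"

text \<open>(A,a) + (B,b): disjoint union with a and b identified; the root is forgotten
(only the underlying structure is returned, i.e. [(A,a)+(B,b)]).\<close>
definition glue :: "'r struc \<Rightarrow> nat \<Rightarrow> 'r struc \<Rightarrow> nat \<Rightarrow> 'r struc" where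
  "glue A a B b =
    (let fA = (\<lambda>x. 2 * x); fB = (\<lambda>y. if y = b then 2 * a else 2 * y + 1)
     in (fA ` fst A \<union> fB ` fst B, \<lambda>R. map fA ` snd A R \<union> map fB ` snd B R))"

definition forest_family :: "('r \<Rightarrow> nat) \<Rightarrow> 'r struc set \<Rightarrow> bool" where
  "forest_family ar F \<longleftrightarrow> F \<subseteq> {A. is_forest ar A} \<and>
     (\<forall>A B. A \<in> F \<longrightarrow> struc_iso A B \<longrightarrow> B \<in> F)"

definition residual :: "('r \<Rightarrow> nat) \<Rightarrow> 'r struc set \<Rightarrow> 'r struc \<Rightarrow> nat \<Rightarrow> ('r struc \<times> nat) set" where
  "residual ar F A a = {(B, b). rooted_forest ar B b \<and> glue A a B b \<in> F}"

definition regular_family :: "('r \<Rightarrow> nat) \<Rightarrow> 'r struc set \<Rightarrow> bool" where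
  "regular_family ar F \<longleftrightarrow>
     finite ((\<lambda>(A, a). residual ar F A a) ` {(A, a). rooted_forest ar A a})"

end

theory Submission
  imports Defs "HOL-Library.FuncSet"
begin


definition smap :: "(nat \<Rightarrow> nat) \<Rightarrow> 'r struc \<Rightarrow> 'r struc" where
  "smap f A = (f ` fst A, \<lambda>R. map f ` snd A R)"
definition sun :: "'r struc \<Rightarrow> 'r struc \<Rightarrow> 'r struc" where
  "sun A B = (fst A \<union> fst B, \<lambda>R. snd A R \<union> snd B R)"
definition closed :: "'r struc \<Rightarrow> bool" where
  "closed A \<longleftrightarrow> (\<forall>R. \<forall>t\<in>snd A R. set t \<subseteq> fst A)"

lemma fst_smap[simp]: "fst (smap f A) = f ` fst A" by (simp add: smap_def)
lemma snd_smap[simp]: "snd (smap f A) R = map f ` snd A R" by (simp add: smap_def)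
lemma fst_sun[simp]: "fst (sun A B) = fst A \<union> fst B" by (simp add: sun_def)
lemma snd_sun[simp]: "snd (sun A B) R = snd A R \<union> snd B R" by (simp add: sun_def)

lemma struc_eqI: "fst A = fst B \<Longrightarrow> (\<And>R. snd A R = snd B R) \<Longrightarrow> A = B"
  by (cases A; cases B) auto

lemma glue_eq: "glue A a B b = sun (smap (\<lambda>x. 2*x) A) (smap (\<lambda>y. if y = b then 2*a else 2*y+1) B)"
  by (simp add: glue_def sun_def smap_def Let_def)

lemma smap_comp: "smap f (smap g A) = smap (f \<circ> g) A"
  by (rule struc_eqI) (auto simp: image_image)

lemma smap_sun: "smap f (sun A B) = sun (smap f A) (smap f B)"
  by (rule struc_eqI) auto

lemma smap_id: "smap (\<lambda>x. x) A = A"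
  by (rule struc_eqI) auto

lemma smap_cong: "closed A \<Longrightarrow> (\<And>x. x \<in> fst A \<Longrightarrow> f x = g x) \<Longrightarrow> smap f A = smap g A"
proof (rule struc_eqI)
  assume c: "closed A" and e: "\<And>x. x \<in> fst A \<Longrightarrow> f x = g x"
  show "fst (smap f A) = fst (smap g A)" using e by simp
  fix R
  have "map f t = map g t" if "t \<in> snd A R" for t
    using that c e unfolding closed_def by (intro map_cong) auto
  then show "snd (smap f A) R = snd (smap g A) R" unfolding snd_smap by (rule image_cong[OF refl])
qed

lemma sun_assoc: "sun (sun A B) C = sun A (sun B C)" by (rule struc_eqI) auto
lemma sun_commute: "sun A B = sun B A" by (rule struc_eqI) auto
lemma sun_left_commute: "sun A (sun B C) = sun B (sun A C)" by (rule struc_eqI) auto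

lemma iso_smap: "inj_on f (fst A) \<Longrightarrow> struc_iso A (smap f A)"
  unfolding struc_iso_def by (auto intro!: exI[of _ f] bij_betw_imageI)

lemma is_struc_closed: "is_struc ar A \<Longrightarrow> closed A"
  by (auto simp: is_struc_def closed_def)

lemma closed_smap: "closed A \<Longrightarrow> closed (smap f A)"
  by (auto simp: closed_def)
lemma closed_sun: "closed A \<Longrightarrow> closed B \<Longrightarrow> closed (sun A B)"
  unfolding closed_def by fastforce

lemma is_struc_smap: "is_struc ar A \<Longrightarrow> is_struc ar (smap f A)"
  by (auto simp: is_struc_def)
lemma is_struc_sun: "is_struc ar A \<Longrightarrow> is_struc ar B \<Longrightarrow> is_struc ar (sun A B)"
  unfolding is_struc_def by fastforce

lemma iso_sun:
  assumes cA: "closed A" and cB: "closed B" and a: "a \<in> fst A" and b: "b \<in> fst B"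
    and i1: "inj_on f1 (fst A)" "inj_on g1 (fst B)" "f1 ` fst A \<inter> g1 ` fst B = {f1 a}" "g1 b = f1 a"
    and i2: "inj_on f2 (fst A)" "inj_on g2 (fst B)" "f2 ` fst A \<inter> g2 ` fst B = {f2 a}" "g2 b = f2 a"
  shows "\<exists>\<theta>. inj_on \<theta> (fst (sun (smap f1 A) (smap g1 B))) \<and>
             smap \<theta> (sun (smap f1 A) (smap g1 B)) = sun (smap f2 A) (smap g2 B)"
proof -
  define \<theta> where "\<theta> z = (if z \<in> f1 ` fst A then f2 (inv_into (fst A) f1 z) else g2 (inv_into (fst B) g1 z))" for z
  have t1: "\<theta> (f1 x) = f2 x" if "x \<in> fst A" for x
    using that i1 by (simp add: \<theta>_def)
  have t2: "\<theta> (g1 y) = g2 y" if "y \<in> fst B" for y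
  proof (cases "g1 y \<in> f1 ` fst A")
    case True
    then have "g1 y = f1 a" using i1(3) that by auto
    then have "y = b" using i1(2,4) that b by (metis inj_onD)
    then show ?thesis using True i1 i2 a \<open>g1 y = f1 a\<close> by (simp add: \<theta>_def)
  next
    case False
    then show ?thesis using that i1 by (simp add: \<theta>_def)
  qed
  have inj: "inj_on \<theta> (f1 ` fst A \<union> g1 ` fst B)"
  proof (rule inj_onI)
    fix z1 z2 assume z1: "z1 \<in> f1 ` fst A \<union> g1 ` fst B" and z2: "z2 \<in> f1 ` fst A \<union> g1 ` fst B"
      and eq: "\<theta> z1 = \<theta> z2"
    have key: "z1 = z2" if "x \<in> fst A" "y \<in> fst B" "z1 = f1 x" "z2 = g1 y" "\<theta> z1 = \<theta> z2" for x y z1 z2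
    proof -
      have "f2 x = g2 y" using that t1 t2 by simp
      then have "f2 x = f2 a" using i2(3) that by blast
      then have "x = a" using i2(1) that a by (metis inj_onD)
      have "g2 y = g2 b" using \<open>f2 x = g2 y\<close> \<open>f2 x = f2 a\<close> i2(4) by simp
      then have "y = b" using i2(2) that b by (metis inj_onD)
      then show ?thesis using that \<open>x = a\<close> i1(4) by simp
    qed
    from z1 z2 show "z1 = z2"
    proof (elim UnE imageE)
      fix x1 x2 assume "x1 \<in> fst A" "z1 = f1 x1" "x2 \<in> fst A" "z2 = f1 x2"
      then show ?thesis using eq t1 i2(1) by (metis inj_onD)
    next
      fix x1 y2 assume "x1 \<in> fst A" "z1 = f1 x1" "y2 \<in> fst B" "z2 = g1 y2"
      then show ?thesis using key eq by blast
    next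
      fix y1 x2 assume "y1 \<in> fst B" "z1 = g1 y1" "x2 \<in> fst A" "z2 = f1 x2"
      then show ?thesis using key[of x2 y1 z2 z1] eq by auto
    next
      fix y1 y2 assume "y1 \<in> fst B" "z1 = g1 y1" "y2 \<in> fst B" "z2 = g1 y2"
      then show ?thesis using eq t2 i2(2) by (metis inj_onD)
    qed
  qed
  have "smap \<theta> (sun (smap f1 A) (smap g1 B)) = sun (smap (\<theta> \<circ> f1) A) (smap (\<theta> \<circ> g1) B)"
    by (simp add: smap_sun smap_comp)
  also have "\<dots> = sun (smap f2 A) (smap g2 B)"
    using smap_cong[OF cA, of "\<theta> \<circ> f1" f2] smap_cong[OF cB, of "\<theta> \<circ> g1" g2] t1 t2 by simp
  finally show ?thesis using inj by auto
qed

lemma forest_sub: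
  assumes Z: "is_forest ar Z" and W: "is_struc ar W" and sub: "\<And>R. snd W R \<subseteq> snd Z R"
  shows "is_forest ar W"
proof -
  have bl: "blocks W \<subseteq> blocks Z" using sub by (auto simp: blocks_def)
  have "no_parallel W" using Z bl by (auto simp: is_forest_def no_parallel_def)
  moreover have "\<not> has_cycle W"
  proof
    assume "has_cycle W"
    then have "has_cycle Z" using bl unfolding has_cycle_def by (meson order_trans)
    then show False using Z by (simp add: is_forest_def)
  qed
  ultimately show ?thesis using W by (simp add: is_forest_def)
qed

definition pt :: "nat \<Rightarrow> 'r struc" where "pt z = ({z}, \<lambda>_. {})"
lemma fst_pt[simp]: "fst (pt z) = {z}" and snd_pt[simp]: "snd (pt z) R = {}"
  by (auto simp: pt_def)
lemma is_struc_pt: "is_struc ar (pt z)" by (simp add: is_struc_def)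

locale fam =
  fixes ar :: "'r::finite \<Rightarrow> nat" and F :: "'r struc set"
  assumes ff: "forest_family ar F"
begin

abbreviation res where "res A a \<equiv> residual ar F A a"

lemma F_smap: "X \<in> F \<Longrightarrow> inj_on \<theta> (fst X) \<Longrightarrow> smap \<theta> X \<in> F"
  using ff iso_smap unfolding forest_family_def by blast

lemma F_forest: "X \<in> F \<Longrightarrow> is_forest ar X"
  using ff unfolding forest_family_def by blast

lemma std_pair:
  fixes a b :: nat
  assumes "a \<in> fst A" "b \<in> fst B"
  shows "inj_on (\<lambda>x::nat. 2*x) S" "inj_on (\<lambda>y. if y = b then 2*a else 2*y+1) T"
    "(\<lambda>x. 2*x) ` fst A \<inter> (\<lambda>y. if y = b then 2*a else 2*y+1) ` fst B = {2*a}"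
proof -
  show "inj_on (\<lambda>x::nat. 2*x) S" by (auto simp: inj_on_def)
  show "inj_on (\<lambda>y. if y = b then 2*a else 2*y+1) T" by (auto simp: inj_on_def; presburger)
  show "(\<lambda>x. 2*x) ` fst A \<inter> (\<lambda>y. if y = b then 2*a else 2*y+1) ` fst B = {2*a}"
    using assms by (auto simp: image_iff split: if_splits) presburger+
qed

lemma glue_iff:
  assumes cA: "closed A" and cB: "closed B" and a: "a \<in> fst A" and b: "b \<in> fst B"
    and i: "inj_on \<phi> (fst A)" "inj_on \<psi> (fst B)" "\<phi> ` fst A \<inter> \<psi> ` fst B = {\<phi> a}" "\<psi> b = \<phi> a"
  shows "glue A a B b \<in> F \<longleftrightarrow> sun (smap \<phi> A) (smap \<psi> B) \<in> F"
proof -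
  note sp = std_pair[OF a b]
  have s: "(if b = b then 2*a else 2*b+1) = 2*a" by simp
  obtain \<theta>1 where t1: "inj_on \<theta>1 (fst (glue A a B b))" "smap \<theta>1 (glue A a B b) = sun (smap \<phi> A) (smap \<psi> B)"
    using iso_sun[OF cA cB a b sp(1) sp(2) sp(3) s i] unfolding glue_eq by blast
  obtain \<theta>2 where t2: "inj_on \<theta>2 (fst (sun (smap \<phi> A) (smap \<psi> B)))" "smap \<theta>2 (sun (smap \<phi> A) (smap \<psi> B)) = glue A a B b"
    using iso_sun[OF cA cB a b i sp(1) sp(2) sp(3) s] unfolding glue_eq by blast
  show ?thesis using t1 t2 F_smap by metis
qed

lemma rf_struc: "rooted_forest ar C c \<Longrightarrow> is_struc ar C"
  by (simp add: rooted_forest_def is_forest_def)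
lemma rf_closed: "rooted_forest ar C c \<Longrightarrow> closed C"
  by (rule is_struc_closed[OF rf_struc])
lemma rf_root: "rooted_forest ar C c \<Longrightarrow> c \<in> fst C"
  by (simp add: rooted_forest_def)

lemma riso_res:
  assumes cA: "closed A" and a: "a \<in> fst A" and inj: "inj_on \<theta> (fst A)"
  shows "res (smap \<theta> A) (\<theta> a) = res A a"
proof (rule set_eqI, clarify)
  fix C c
  show "(C, c) \<in> res (smap \<theta> A) (\<theta> a) \<longleftrightarrow> (C, c) \<in> res A a"
  proof (cases "rooted_forest ar C c")
    case True
    note rf = True
    define g where "g = (\<lambda>y. if y = c then 2 * \<theta> a else 2*y+1)"
    have e1: "glue (smap \<theta> A) (\<theta> a) C c = sun (smap ((\<lambda>x. 2*x) \<circ> \<theta>) A) (smap g C)"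
      by (simp add: glue_eq smap_comp g_def)
    have sp: "inj_on g (fst C)" "(\<lambda>x. 2*x) ` fst (smap \<theta> A) \<inter> g ` fst C = {2 * \<theta> a}"
      using std_pair[of "\<theta> a" "smap \<theta> A" c C] a rf_root[OF rf] unfolding g_def by auto
    have "glue A a C c \<in> F \<longleftrightarrow> sun (smap ((\<lambda>x. 2*x) \<circ> \<theta>) A) (smap g C) \<in> F"
    proof (rule glue_iff[OF cA rf_closed[OF rf] a rf_root[OF rf]])
      show "inj_on ((\<lambda>x. 2 * x) \<circ> \<theta>) (fst A)" using inj by (auto simp: inj_on_def)
      show "inj_on g (fst C)" by (rule sp(1))
      show "((\<lambda>x. 2 * x) \<circ> \<theta>) ` fst A \<inter> g ` fst C = {((\<lambda>x. 2 * x) \<circ> \<theta>) a}"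
        using sp(2) by (simp add: image_comp)
      show "g c = ((\<lambda>x. 2 * x) \<circ> \<theta>) a" by (simp add: g_def)
    qed
    then show ?thesis using e1 rf by (simp add: residual_def)
  next
    case False
    then show ?thesis by (simp add: residual_def)
  qed
qed

lemma ctx1:
  assumes cX: "closed X" and x: "x \<in> fst X" and ih: "inj_on h (fst X)" and hx: "h x = w"
    and m: "h ` fst X \<inter> fst W = {w}"
    and cX': "closed X'" and x': "x' \<in> fst X'" and ih': "inj_on h' (fst X')" and hx': "h' x' = w"
    and m': "h' ` fst X' \<inter> fst W = {w}"
    and W: "is_struc ar W" and r: "res X x = res X' x'"
    and L: "sun (smap h X) W \<in> F"
  shows "sun (smap h' X') W \<in> F"
proof -
  have "is_forest ar W"
    using forest_sub[OF F_forest[OF L] W] by auto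
  moreover have "w \<in> fst W" using m by auto
  ultimately have rfW: "rooted_forest ar W w" by (simp add: rooted_forest_def)
  have cW: "closed W" using W by (rule is_struc_closed)
  have inj_id: "inj_on (\<lambda>x. x) S" for S :: "nat set" by simp
  have g: "glue X x W w \<in> F \<longleftrightarrow> sun (smap h X) (smap (\<lambda>x. x) W) \<in> F"
    by (rule glue_iff[OF cX cW x \<open>w \<in> fst W\<close> ih inj_id]) (use m hx in auto)
  have g': "glue X' x' W w \<in> F \<longleftrightarrow> sun (smap h' X') (smap (\<lambda>x. x) W) \<in> F"
    by (rule glue_iff[OF cX' cW x' \<open>w \<in> fst W\<close> ih' inj_id]) (use m' hx' in auto)
  have "(W, w) \<in> res X x" using g L rfW by (simp add: smap_id residual_def)
  then have "(W, w) \<in> res X' x'" using r by simp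
  then show ?thesis using g' by (simp add: smap_id residual_def)
qed

lemma ctx:
  assumes "closed X" "x \<in> fst X" "inj_on h (fst X)" "h x = w" "h ` fst X \<inter> fst W = {w}"
    "closed X'" "x' \<in> fst X'" "inj_on h' (fst X')" "h' x' = w" "h' ` fst X' \<inter> fst W = {w}"
    "is_struc ar W" "res X x = res X' x'"
  shows "sun (smap h X) W \<in> F \<longleftrightarrow> sun (smap h' X') W \<in> F"
  using ctx1[OF assms] ctx1[OF assms(6-10) assms(1-5) assms(11) assms(12)[symmetric]] by blast

lemma opcong:
  assumes cX: "closed X" and x: "x \<in> fst X" and ih: "inj_on h (fst X)" and hx: "h x = r"
    and cX': "closed X'" and x': "x' \<in> fst X'" and ih': "inj_on h' (fst X')" and hx': "h' x' = r"
    and Wo: "is_struc ar Wo" and m: "h ` fst X \<inter> fst Wo \<subseteq> {r}" and m': "h' ` fst X' \<inter> fst Wo \<subseteq> {r}"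
    and z: "0 \<in> h ` fst X \<Longrightarrow> r = 0" and z': "0 \<in> h' ` fst X' \<Longrightarrow> r = 0"
    and rr: "res X x = res X' x'"
  shows "res (sun (smap h X) Wo) 0 = res (sun (smap h' X') Wo) 0"
proof (rule set_eqI, clarify)
  fix C c
  show "(C, c) \<in> res (sun (smap h X) Wo) 0 \<longleftrightarrow> (C, c) \<in> res (sun (smap h' X') Wo) 0"
  proof (cases "rooted_forest ar C c")
    case False then show ?thesis by (simp add: residual_def)
  next
    case True
    note rf = True
    define g where "g = (\<lambda>y. if y = c then 2*0 else (2::nat)*y+1)"
    define W where "W = sun (sun (smap (\<lambda>x. 2*x) Wo) (smap g C)) (pt (2*r))"
    have eq: "glue (sun (smap k Y) Wo) 0 C c = sun (smap ((\<lambda>x. 2*x) \<circ> k) Y) W"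
      if "y \<in> fst Y" "k y = r" for k Y y
    proof -
      have "glue (sun (smap k Y) Wo) 0 C c = sun (sun (smap ((\<lambda>x. 2*x) \<circ> k) Y) (smap (\<lambda>x. 2*x) Wo)) (smap g C)"
        by (simp add: glue_eq smap_sun smap_comp g_def)
      also have "\<dots> = sun (smap ((\<lambda>x. 2*x) \<circ> k) Y) W"
        using that unfolding W_def by (intro struc_eqI) auto
      finally show ?thesis .
    qed
    have WS: "is_struc ar W" unfolding W_def
      by (intro is_struc_sun is_struc_smap is_struc_pt rf_struc[OF rf] Wo)
    have meet: "((\<lambda>x. 2*x) \<circ> k) ` fst Y \<inter> fst W = {2*r}"
      if "y \<in> fst Y" "k y = r" "k ` fst Y \<inter> fst Wo \<subseteq> {r}" "0 \<in> k ` fst Y \<Longrightarrow> r = 0" for k Y y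
    proof
      show "{2*r} \<subseteq> ((\<lambda>x. 2*x) \<circ> k) ` fst Y \<inter> fst W"
        using that by (auto simp: W_def)
      show "((\<lambda>x. 2*x) \<circ> k) ` fst Y \<inter> fst W \<subseteq> {2*r}"
      proof
        fix z assume zz: "z \<in> ((\<lambda>x. 2*x) \<circ> k) ` fst Y \<inter> fst W"
        then obtain y1 where y1: "y1 \<in> fst Y" "z = 2 * k y1" by auto
        from zz have "z \<in> (\<lambda>x. 2*x) ` fst Wo \<or> z \<in> g ` fst C \<or> z = 2*r" by (auto simp: W_def)
        then show "z \<in> {2*r}"
        proof (elim disjE)
          assume "z \<in> (\<lambda>x. 2*x) ` fst Wo"
          then obtain w1 where "w1 \<in> fst Wo" "z = 2*w1" by auto
          then have "k y1 \<in> k ` fst Y \<inter> fst Wo" using y1 by auto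
          then show ?thesis using that(3) y1 by auto
        next
          assume "z \<in> g ` fst C"
          then obtain c1 where "c1 \<in> fst C" "z = g c1" by auto
          then have "z = 0" using y1 by (auto simp: g_def split: if_splits; presburger)
          then have "0 \<in> k ` fst Y" using y1 by auto
          then show ?thesis using that(4) \<open>z = 0\<close> by simp
        qed simp
      qed
    qed
    have inj2: "inj_on ((\<lambda>x. 2*x) \<circ> k) S" if "inj_on k S" for k :: "nat \<Rightarrow> nat" and S
      using that by (auto simp: inj_on_def)
    have "sun (smap ((\<lambda>x. 2*x) \<circ> h) X) W \<in> F \<longleftrightarrow> sun (smap ((\<lambda>x. 2*x) \<circ> h') X') W \<in> F"
      by (rule ctx[OF cX x inj2[OF ih] _ meet[OF x hx m z] cX' x' inj2[OF ih'] _ meet[OF x' hx' m' z'] WS rr])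
         (use hx hx' in auto)
    then show ?thesis using rf eq[of x X h, OF x hx] eq[of x' X' h', OF x' hx'] by (simp add: residual_def)
  qed
qed

end



definition code :: "nat \<Rightarrow> nat \<Rightarrow> nat" where "code j z = Suc (prod_encode (j, z))"

lemma code_inj[simp]: "code j z = code j' z' \<longleftrightarrow> j = j' \<and> z = z'"
  using inj_prod_encode[of UNIV] by (auto simp: code_def inj_on_def)
lemma code_nz[simp]: "code j z \<noteq> 0" "0 \<noteq> code j z" by (auto simp: code_def)

definition rj :: "nat \<Rightarrow> nat \<Rightarrow> nat" where "rj i j = (if j = i then 0 else code (Suc j) 0)"
definition embj :: "nat \<Rightarrow> nat \<Rightarrow> nat \<Rightarrow> nat \<Rightarrow> nat" where
  "embj i j r z = (if z = r then rj i j else code (Suc j) (Suc z))"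
definition BLK :: "('r \<Rightarrow> nat) \<Rightarrow> 'r \<Rightarrow> nat \<Rightarrow> 'r struc" where
  "BLK ar R i = (insert 0 {code (Suc j) 0 | j. j < ar R \<and> j \<noteq> i},
                 \<lambda>S. if S = R then {map (rj i) [0..<ar R]} else {})"
definition UNS :: "nat set \<Rightarrow> (nat \<Rightarrow> 'r struc) \<Rightarrow> 'r struc" where
  "UNS I f = (\<Union>j\<in>I. fst (f j), \<lambda>S. \<Union>j\<in>I. snd (f j) S)"
definition EXTf :: "nat \<Rightarrow> (nat \<Rightarrow> 'r struc \<times> nat) \<Rightarrow> nat \<Rightarrow> 'r struc" where
  "EXTf i Bs j = smap (embj i j (snd (Bs j))) (fst (Bs j))"
definition EXT :: "('r \<Rightarrow> nat) \<Rightarrow> 'r \<Rightarrow> nat \<Rightarrow> (nat \<Rightarrow> 'r struc \<times> nat) \<Rightarrow> 'r struc" where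
  "EXT ar R i Bs = sun (BLK ar R i) (UNS {..<ar R} (EXTf i Bs))"
definition embI :: "nat \<Rightarrow> nat \<Rightarrow> nat" where
  "embI g z = (if z = g then code 0 0 else code 0 (Suc z))"
definition ISOr :: "'r struc \<Rightarrow> nat \<Rightarrow> 'r struc" where "ISOr G g = smap (embI g) G"
definition embP :: "nat \<Rightarrow> nat \<Rightarrow> nat" where "embP p z = (if z = p then 0 else code 1 z)"
definition C3 :: "'r struc \<Rightarrow> nat \<Rightarrow> 'r struc \<Rightarrow> nat \<Rightarrow> 'r struc" where
  "C3 P p G g = sun (smap (embP p) P) (ISOr G g)"
definition BASE :: "'r set \<Rightarrow> 'r struc" where
  "BASE N = ({0}, \<lambda>R. if R \<in> N then {[]} else {})"
definition emp :: "'r struc" where "emp = ({}, \<lambda>_. {})"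

lemma fst_UNS[simp]: "fst (UNS I f) = (\<Union>j\<in>I. fst (f j))" by (simp add: UNS_def)
lemma snd_UNS[simp]: "snd (UNS I f) S = (\<Union>j\<in>I. snd (f j) S)" by (simp add: UNS_def)
lemma fst_BLK: "fst (BLK ar R i) = insert 0 {code (Suc j) 0 | j. j < ar R \<and> j \<noteq> i}" by (simp add: BLK_def)
lemma snd_BLK: "snd (BLK ar R i) S = (if S = R then {map (rj i) [0..<ar R]} else {})" by (simp add: BLK_def)
lemma sun_emp[simp]: "sun X emp = X" by (rule struc_eqI) (auto simp: emp_def)
lemma is_struc_emp: "is_struc ar emp" by (simp add: emp_def is_struc_def)

lemma inj_embj: "inj_on (embj i j r) S"
  by (auto simp: inj_on_def embj_def rj_def split: if_splits)
lemma inj_embI: "inj_on (embI g) S" by (auto simp: inj_on_def embI_def)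
lemma inj_embP: "inj_on (embP p) S" by (auto simp: inj_on_def embP_def)

lemma embj_range: "embj i j r z = rj i j \<or> (\<exists>y. embj i j r z = code (Suc j) (Suc y))"
  by (auto simp: embj_def)
lemma rj_cases: "rj i j = 0 \<and> j = i \<or> rj i j = code (Suc j) 0 \<and> j \<noteq> i"
  by (auto simp: rj_def)

lemma is_struc_UNS: "finite I \<Longrightarrow> (\<And>j. j \<in> I \<Longrightarrow> is_struc ar (f j)) \<Longrightarrow> is_struc ar (UNS I f)"
  unfolding is_struc_def by (auto; blast)

lemma is_struc_BLK: "is_struc ar (BLK ar R i)"
proof -
  have "finite {code (Suc j) 0 | j. j < ar R \<and> j \<noteq> i}"
    using finite_imageI[of "{j. j < ar R \<and> j \<noteq> i}" "\<lambda>j. code (Suc j) 0"]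
    by (simp add: setcompr_eq_image)
  moreover have "set (map (rj i) [0..<ar R]) \<subseteq> insert 0 {code (Suc j) 0 | j. j < ar R \<and> j \<noteq> i}"
    by (auto simp: rj_def)
  ultimately show ?thesis by (auto simp: is_struc_def BLK_def)
qed

lemma is_struc_EXT:
  "(\<And>j. j < ar R \<Longrightarrow> is_struc ar (fst (Bs j))) \<Longrightarrow> is_struc ar (EXT ar R i Bs)"
  unfolding EXT_def EXTf_def
  by (intro is_struc_sun is_struc_BLK is_struc_UNS is_struc_smap) auto

lemma fst_EXT_code0: "x \<in> fst (EXT ar R i Bs) \<Longrightarrow> x \<notin> range (code 0)"
proof
  assume x: "x \<in> fst (EXT ar R i Bs)" and c: "x \<in> range (code 0)"
  from x have "x \<in> fst (BLK ar R i) \<or> (\<exists>j z. x = embj i j (snd (Bs j)) z)"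
    unfolding EXT_def EXTf_def by auto
  then show False
  proof
    assume "x \<in> fst (BLK ar R i)" then show False using c by (auto simp: fst_BLK)
  next
    assume "\<exists>j z. x = embj i j (snd (Bs j)) z"
    then obtain j z where "x = embj i j (snd (Bs j)) z" by blast
    then show False using c embj_range[of i j] rj_cases[of i j] by (metis code_inj code_nz(2) imageE nat.distinct(1))
  qed
qed

lemma EXT_split:
  assumes "m < ar R"
  shows "EXT ar R i Bs = sun (EXTf i Bs m) (sun (BLK ar R i) (UNS ({..<ar R} - {m}) (EXTf i Bs)))"
  unfolding EXT_def using assms by (intro struc_eqI) auto

lemma EXTf_meet:
  "fst (EXTf i Bs m) \<inter> fst (sun (sun (BLK ar R i) (UNS ({..<ar R} - {m}) (EXTf i Bs))) Z) \<subseteq> {rj i m}"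
  if "fst Z \<subseteq> range (code 0)"
proof
  fix x assume x: "x \<in> fst (EXTf i Bs m) \<inter> fst (sun (sun (BLK ar R i) (UNS ({..<ar R} - {m}) (EXTf i Bs))) Z)"
  then obtain z where xz: "x = embj i m (snd (Bs m)) z" by (auto simp: EXTf_def)
  show "x \<in> {rj i m}"
  proof (cases "x = rj i m")
    case False
    then obtain y where y: "x = code (Suc m) (Suc y)" using embj_range[of i m] xz by metis
    from x have "x \<in> fst (BLK ar R i) \<or> (\<exists>j\<in>{..<ar R} - {m}. x \<in> fst (EXTf i Bs j)) \<or> x \<in> fst Z"
      by auto
    then show ?thesis
    proof (elim disjE)
      assume "x \<in> fst (BLK ar R i)" then show ?thesis using y by (auto simp: fst_BLK)
    next
      assume "\<exists>j\<in>{..<ar R} - {m}. x \<in> fst (EXTf i Bs j)"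
      then obtain j z' where "j \<noteq> m" "x = embj i j (snd (Bs j)) z'" by (auto simp: EXTf_def)
      then show ?thesis using y embj_range[of i j] rj_cases[of i j] by (metis code_inj code_nz(1) nat.inject)
    next
      assume "x \<in> fst Z" then show ?thesis using y that by auto
    qed
  qed simp
qed

lemma UNS_cong: "(\<And>j. j \<in> I \<Longrightarrow> f j = g j) \<Longrightarrow> UNS I f = UNS I g"
  by (simp add: UNS_def)

context fam begin

lemma cong_ext:
  assumes Z: "is_struc ar Z" "fst Z \<subseteq> range (code 0)"
    and rfs: "\<And>j. j < ar R \<Longrightarrow> rooted_forest ar (fst (Bs j)) (snd (Bs j)) \<and>
                 rooted_forest ar (fst (Bs' j)) (snd (Bs' j)) \<and>
                 res (fst (Bs j)) (snd (Bs j)) = res (fst (Bs' j)) (snd (Bs' j))"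
  shows "res (sun (EXT ar R i Bs) Z) 0 = res (sun (EXT ar R i Bs') Z) 0"
proof -
  define Mix where "Mix m j = (if j < m then Bs' j else Bs j)" for m j
  have rfM: "rooted_forest ar (fst (Mix m j)) (snd (Mix m j))" if "j < ar R" for m j
    using rfs[OF that] by (simp add: Mix_def)
  have step: "res (sun (EXT ar R i (Mix (Suc m))) Z) 0 = res (sun (EXT ar R i (Mix m)) Z) 0"
    if m: "m < ar R" for m
  proof -
    define Wo where "Wo = sun (sun (BLK ar R i) (UNS ({..<ar R} - {m}) (EXTf i (Mix m)))) Z"
    have same: "UNS ({..<ar R} - {m}) (EXTf i (Mix (Suc m))) = UNS ({..<ar R} - {m}) (EXTf i (Mix m))"
      by (rule UNS_cong) (auto simp: EXTf_def Mix_def)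
    have e1: "sun (EXT ar R i (Mix (Suc m))) Z = sun (smap (embj i m (snd (Bs' m))) (fst (Bs' m))) Wo"
      unfolding EXT_split[where Bs="Mix (Suc m)" and i=i and ar=ar and R=R, OF m] Wo_def same
      by (simp add: sun_assoc EXTf_def Mix_def)
    have e2: "sun (EXT ar R i (Mix m)) Z = sun (smap (embj i m (snd (Bs m))) (fst (Bs m))) Wo"
      unfolding EXT_split[where Bs="Mix m" and i=i and ar=ar and R=R, OF m] Wo_def
      by (simp add: sun_assoc EXTf_def Mix_def)
    have WS: "is_struc ar Wo" unfolding Wo_def EXTf_def
      using rfM by (intro is_struc_sun is_struc_BLK is_struc_UNS is_struc_smap Z rf_struc) auto
    have me: "fst (EXTf i (Mix k) m) \<inter> fst Wo \<subseteq> {rj i m}" if k: "k = m \<or> k = Suc m" for k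
    proof -
      have "Wo = sun (sun (BLK ar R i) (UNS ({..<ar R} - {m}) (EXTf i (Mix k)))) Z"
        using k same unfolding Wo_def by auto
      then show ?thesis using EXTf_meet[of Z i "Mix k" m ar R] Z by simp
    qed
    have me1: "embj i m (snd (Bs' m)) ` fst (fst (Bs' m)) \<inter> fst Wo \<subseteq> {rj i m}"
      using me[of "Suc m"] by (simp add: EXTf_def Mix_def)
    have me2: "embj i m (snd (Bs m)) ` fst (fst (Bs m)) \<inter> fst Wo \<subseteq> {rj i m}"
      using me[of m] by (simp add: EXTf_def Mix_def)
    have z: "0 \<in> embj i m r ` S \<Longrightarrow> rj i m = 0" for r S
      using embj_range[of i m r] by (metis code_nz(2) imageE)
    have "res (sun (smap (embj i m (snd (Bs' m))) (fst (Bs' m))) Wo) 0 =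
          res (sun (smap (embj i m (snd (Bs m))) (fst (Bs m))) Wo) 0"
      using rfs[OF m]
      by (intro opcong[OF rf_closed rf_root inj_embj _ rf_closed rf_root inj_embj _ WS me1 me2 z z])
         (auto simp: embj_def)
    then show ?thesis using e1 e2 by simp
  qed
  have "m \<le> ar R \<Longrightarrow> res (sun (EXT ar R i (Mix m)) Z) 0 = res (sun (EXT ar R i Bs) Z) 0" for m
  proof (induction m)
    case 0 then show ?case by (simp add: Mix_def)
  next
    case (Suc m) then show ?case using step[of m] by simp
  qed
  from this[of "ar R"] have "res (sun (EXT ar R i (Mix (ar R))) Z) 0 = res (sun (EXT ar R i Bs) Z) 0" by simp
  moreover have "EXT ar R i (Mix (ar R)) = EXT ar R i Bs'"
    unfolding EXT_def by (rule arg_cong[of _ _ "sun _"], rule UNS_cong) (simp add: EXTf_def Mix_def)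
  ultimately show ?thesis by simp
qed

lemma cong_C1:
  assumes "\<And>j. j < ar R \<Longrightarrow> rooted_forest ar (fst (Bs j)) (snd (Bs j)) \<and>
                 rooted_forest ar (fst (Bs' j)) (snd (Bs' j)) \<and>
                 res (fst (Bs j)) (snd (Bs j)) = res (fst (Bs' j)) (snd (Bs' j))"
  shows "res (EXT ar R i Bs) 0 = res (EXT ar R i Bs') 0"
proof -
  have "res (sun (EXT ar R i Bs) emp) 0 = res (sun (EXT ar R i Bs') emp) 0"
    by (rule cong_ext[OF is_struc_emp]) (use assms in \<open>auto simp: emp_def\<close>)
  then show ?thesis by simp
qed

lemma embI_code0: "embI g z \<in> range (code 0)" by (auto simp: embI_def)

lemma cong_C2:
  assumes rfs: "\<And>j. j < ar R \<Longrightarrow> rooted_forest ar (fst (Bs j)) (snd (Bs j)) \<and>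
                 rooted_forest ar (fst (Bs' j)) (snd (Bs' j)) \<and>
                 res (fst (Bs j)) (snd (Bs j)) = res (fst (Bs' j)) (snd (Bs' j))"
    and G: "rooted_forest ar G g" "rooted_forest ar G' g'" "res G g = res G' g'"
  shows "res (sun (EXT ar R i Bs) (ISOr G g)) 0 = res (sun (EXT ar R i Bs') (ISOr G' g')) 0"
proof -
  have "res (sun (EXT ar R i Bs) (ISOr G g)) 0 = res (sun (EXT ar R i Bs') (ISOr G g)) 0"
  proof (rule cong_ext)
    show "is_struc ar (ISOr G g)" unfolding ISOr_def by (rule is_struc_smap[OF rf_struc[OF G(1)]])
    show "fst (ISOr G g) \<subseteq> range (code 0)" unfolding ISOr_def using embI_code0 by auto
  qed (use rfs in auto)
  also have "\<dots> = res (sun (ISOr G g) (EXT ar R i Bs')) 0" by (simp add: sun_commute)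
  also have "\<dots> = res (sun (ISOr G' g') (EXT ar R i Bs')) 0"
    unfolding ISOr_def
  proof (rule opcong[OF rf_closed[OF G(1)] rf_root[OF G(1)] inj_embI refl
                        rf_closed[OF G(2)] rf_root[OF G(2)] inj_embI _])
    show "embI g' g' = embI g g" by (simp add: embI_def)
    show "is_struc ar (EXT ar R i Bs')" using rfs rf_struc by (intro is_struc_EXT) blast
    show "embI g ` fst G \<inter> fst (EXT ar R i Bs') \<subseteq> {embI g g}"
      by (auto dest: fst_EXT_code0 simp: embI_code0)
    show "embI g' ` fst G' \<inter> fst (EXT ar R i Bs') \<subseteq> {embI g g}"
      by (auto dest: fst_EXT_code0 simp: embI_code0)
    show "0 \<in> embI g ` fst G \<Longrightarrow> embI g g = 0" "0 \<in> embI g' ` fst G' \<Longrightarrow> embI g g = 0"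
      using embI_code0 by (metis code_nz(2) imageE rangeE)+
  qed (rule G(3))
  also have "\<dots> = res (sun (EXT ar R i Bs') (ISOr G' g')) 0" by (simp add: sun_commute)
  finally show ?thesis .
qed

lemma cong_C3:
  assumes P: "rooted_forest ar P p" "rooted_forest ar P' p'" "res P p = res P' p'"
    and G: "rooted_forest ar G g" "rooted_forest ar G' g'" "res G g = res G' g'"
  shows "res (C3 P p G g) 0 = res (C3 P' p' G' g') 0"
proof -
  have d1: "embP p ` fst P \<inter> fst (ISOr G g) \<subseteq> {0}" for p P G g
    by (auto simp: embP_def embI_def ISOr_def)
  have d2: "embI g ` fst G \<inter> fst (smap (embP p) P) \<subseteq> {embI g g}" for p P G g
    by (auto simp: embP_def embI_def)
  have z1: "0 \<in> embP p ` S \<Longrightarrow> (0::nat) = 0" for p S by simp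
  have z2: "0 \<in> embI g ` S \<Longrightarrow> embI g g = 0" for g S by (auto simp: embI_def)
  have "res (C3 P p G g) 0 = res (C3 P' p' G g) 0"
    unfolding C3_def
  proof (rule opcong[OF rf_closed[OF P(1)] rf_root[OF P(1)] inj_embP _
                        rf_closed[OF P(2)] rf_root[OF P(2)] inj_embP _ _ d1 d1 z1 z1 P(3)])
    show "embP p p = 0" "embP p' p' = 0" by (simp_all add: embP_def)
    show "is_struc ar (ISOr G g)" unfolding ISOr_def by (rule is_struc_smap[OF rf_struc[OF G(1)]])
  qed
  also have "\<dots> = res (sun (ISOr G g) (smap (embP p') P')) 0" by (simp add: C3_def sun_commute)
  also have "\<dots> = res (sun (ISOr G' g') (smap (embP p') P')) 0"
    unfolding ISOr_def
  proof (rule opcong[OF rf_closed[OF G(1)] rf_root[OF G(1)] inj_embI refl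
                        rf_closed[OF G(2)] rf_root[OF G(2)] inj_embI _ _ d2 _ z2 _ G(3)])
    show "embI g' g' = embI g g" by (simp add: embI_def)
    show "is_struc ar (smap (embP p') P')" by (rule is_struc_smap[OF rf_struc[OF P(2)]])
    show "embI g' ` fst G' \<inter> fst (smap (embP p') P') \<subseteq> {embI g g}"
      by (auto simp: embP_def embI_def)
    show "0 \<in> embI g' ` fst G' \<Longrightarrow> embI g g = 0" by (auto simp: embI_def)
  qed
  also have "\<dots> = res (C3 P' p' G' g') 0" by (simp add: C3_def sun_commute)
  finally show ?thesis .
qed

end


definition adj :: "'r struc \<Rightarrow> (nat \<times> nat) set" where
  "adj A = {(x,y). \<exists>R t. t \<in> snd A R \<and> x \<in> set t \<and> y \<in> set t}"
definition del :: "'r struc \<Rightarrow> 'r \<Rightarrow> nat list \<Rightarrow> 'r struc" where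
  "del A R t = (fst A, (snd A)(R := snd A R - {t}))"
definition walk :: "'r struc \<Rightarrow> (nat \<Rightarrow> nat) \<Rightarrow> (nat \<Rightarrow> 'r \<times> nat list) \<Rightarrow> nat \<Rightarrow> bool" where
  "walk A w c m \<longleftrightarrow> (\<forall>p<m. c p \<in> blocks A \<and> w p \<in> set (snd (c p)) \<and> w (Suc p) \<in> set (snd (c p)))"

lemma fst_del[simp]: "fst (del A R t) = fst A" by (simp add: del_def)
lemma snd_del: "snd (del A R t) S = (if S = R then snd A R - {t} else snd A S)" by (simp add: del_def)
lemma blocks_del: "blocks (del A R t) = blocks A - {(R, t)}"
  by (auto simp: blocks_def snd_del split: if_splits)

lemma walk_of_rtrancl:
  assumes "(x, y) \<in> (adj A)\<^sup>*"
  shows "\<exists>w c m. w 0 = x \<and> w m = y \<and> walk A w c m"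
  using assms
proof (induction rule: rtrancl_induct)
  case base
  show ?case by (rule exI[of _ "\<lambda>_. x"], rule exI[of _ "\<lambda>_. undefined"], rule exI[of _ 0]) (simp add: walk_def)
next
  case (step y z)
  then obtain w c m where wcm: "w 0 = x" "w m = y" "walk A w c m" by blast
  from step(2) obtain R t where Rt: "t \<in> snd A R" "y \<in> set t" "z \<in> set t" by (auto simp: adj_def)
  define w' where "w' = w(Suc m := z)"
  define c' where "c' = c(m := (R, t))"
  have "walk A w' c' (Suc m)"
    unfolding walk_def
  proof (intro allI impI)
    fix p assume p: "p < Suc m"
    show "c' p \<in> blocks A \<and> w' p \<in> set (snd (c' p)) \<and> w' (Suc p) \<in> set (snd (c' p))"
    proof (cases "p = m")
      case True then show ?thesis using Rt wcm by (simp add: w'_def c'_def blocks_def)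
    next
      case False then have "p < m" using p by simp
      then show ?thesis using wcm(3) by (simp add: w'_def c'_def walk_def)
    qed
  qed
  moreover have "w' 0 = x" "w' (Suc m) = z" using wcm by (simp_all add: w'_def)
  ultimately show ?case by blast
qed

lemma walk_shortcut:
  assumes W: "walk A w c m" and pq: "p \<le> q" "q < m" and b: "b \<in> blocks A"
    and bp: "w p \<in> set (snd b)" and bq: "w (Suc q) \<in> set (snd b)"
  defines "d \<equiv> q - p"
  shows "walk A (\<lambda>i. if i \<le> p then w i else w (i + d))
                 (\<lambda>i. if i < p then c i else if i = p then b else c (i + d)) (m - d)"
  unfolding walk_def
proof (intro allI impI)
  fix i assume i: "i < m - d"
  show "(if i < p then c i else if i = p then b else c (i + d)) \<in> blocks A \<and>
        (if i \<le> p then w i else w (i + d)) \<in> set (snd (if i < p then c i else if i = p then b else c (i + d))) \<and>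
        (if Suc i \<le> p then w (Suc i) else w (Suc i + d)) \<in> set (snd (if i < p then c i else if i = p then b else c (i + d)))"
  proof (cases "i < p")
    case True then show ?thesis using W pq i by (auto simp: walk_def d_def)
  next
    case False
    show ?thesis
    proof (cases "i = p")
      case True then show ?thesis using b bp bq pq by (simp add: d_def)
    next
      case False
      then have "p < i" "i + d < m" using \<open>\<not> i < p\<close> i pq by (auto simp: d_def)
      then show ?thesis using W by (auto simp: walk_def)
    qed
  qed
qed

lemma cycle_from_walk:
  assumes Rt: "t \<in> snd A R"
    and W: "walk (del A R t) w0 c0 m0" "w0 0 \<in> set t" "w0 m0 \<in> set t" "w0 0 \<noteq> w0 m0"
  shows "has_cycle A"
proof -
  let ?A' = "del A R t"
  define P where "P m \<longleftrightarrow> (\<exists>w c. walk ?A' w c m \<and> w 0 \<in> set t \<and> w m \<in> set t \<and> w 0 \<noteq> w m)" for m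
  have "P m0" using W by (auto simp: P_def)
  define m where "m = (LEAST m. P m)"
  have Pm: "P m" unfolding m_def by (rule LeastI[of P, OF \<open>P m0\<close>])
  have minm: "\<not> P k" if "k < m" for k using that not_less_Least unfolding m_def by blast
  from Pm obtain w c where wc: "walk ?A' w c m" "w 0 \<in> set t" "w m \<in> set t" "w 0 \<noteq> w m"
    by (auto simp: P_def)
  have m1: "1 \<le> m" using wc(4) by (cases m) auto
  have short: "False" if "p \<le> q" "q < m" "p < q" "b \<in> blocks ?A'" "w p \<in> set (snd b)" "w (Suc q) \<in> set (snd b)"
    for p q b
  proof -
    let ?d = "q - p"
    let ?w = "\<lambda>i. if i \<le> p then w i else w (i + ?d)"
    let ?c = "\<lambda>i. if i < p then c i else if i = p then b else c (i + ?d)"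
    have "walk ?A' ?w ?c (m - ?d)" using walk_shortcut[OF wc(1) that(1,2,4,5,6)] by simp
    moreover have "?w 0 = w 0" by simp
    moreover have "?w (m - ?d) = w m" using that by auto
    ultimately have "P (m - ?d)" using wc by (auto simp: P_def)
    moreover have "m - ?d < m" using that by auto
    ultimately show False using minm by blast
  qed
  have cb: "c p \<in> blocks ?A'" "w p \<in> set (snd (c p))" "w (Suc p) \<in> set (snd (c p))" if "p < m" for p
    using wc(1) that by (auto simp: walk_def)
  have dw: "w p \<noteq> w q" if "p < q" "q \<le> m" for p q
  proof
    assume eq: "w p = w q"
    show False
    proof (cases "q < m")
      case True
      then show False using short[of p q "c q"] cb[OF True] eq that by simp
    next
      case False
      then have q: "q = m" using that by simp
      show False
      proof (cases p)
        case 0 then show False using eq q wc(4) by simp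
      next
        case (Suc p')
        have p1: "p' < m - 1" "p' \<le> m - 1" "m - 1 < m" using Suc that q m1 by auto
        have "w (Suc (m - 1)) = w m" using m1 by simp
        then have "w (Suc (m - 1)) \<in> set (snd (c p'))" using cb(3)[of p'] eq q Suc p1 by auto
        then show False using short[OF p1(2,3,1) cb(1,2)[of p']] p1 by auto
      qed
    qed
  qed
  have dc: "c p \<noteq> c q" if "p < q" "q < m" for p q
  proof
    assume eq: "c p = c q"
    show False using short[of p q "c p"] cb[of p] cb[of q] eq that by auto
  qed
  define vs where "vs = map w [0..<Suc m]"
  define bs where "bs = map c [0..<m] @ [(R, t)]"
  have lens: "length vs = Suc m" "length bs = Suc m" by (simp_all add: vs_def bs_def)
  have "distinct vs"
    unfolding vs_def distinct_conv_nth
  proof (auto simp del: upt_Suc)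
    fix i j assume "i < Suc m" "j < Suc m" "i \<noteq> j" "w i = w j"
    then show False using dw[of i j] dw[of j i] by (cases "i < j") auto
  qed
  moreover have "distinct bs"
  proof -
    have "distinct (map c [0..<m])" unfolding distinct_conv_nth using dc
      by (auto) (metis linorder_neqE_nat)
    moreover have "(R, t) \<notin> set (map c [0..<m])"
    proof
      assume "(R, t) \<in> set (map c [0..<m])"
      then obtain x where "x < m" "c x = (R, t)" by auto
      then show False using cb(1)[of x] by (simp add: blocks_del)
    qed
    ultimately show ?thesis by (simp add: bs_def)
  qed
  moreover have "set bs \<subseteq> blocks A"
  proof -
    have "c x \<in> blocks A" if "x < m" for x using cb(1)[OF that] by (simp add: blocks_del)
    moreover have "(R, t) \<in> blocks A" using Rt by (simp add: blocks_def)
    ultimately show ?thesis by (auto simp: bs_def)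
  qed
  moreover have "\<forall>i<length vs. vs ! i \<in> set (snd (bs ! i)) \<and> vs ! ((i + 1) mod length vs) \<in> set (snd (bs ! i))"
  proof (intro allI impI)
    fix i assume i: "i < length vs"
    show "vs ! i \<in> set (snd (bs ! i)) \<and> vs ! ((i + 1) mod length vs) \<in> set (snd (bs ! i))"
    proof (cases "i < m")
      case True
      have "bs ! i = c i" using True by (simp add: bs_def nth_append)
      moreover have "vs ! i = w i" "vs ! ((i+1) mod length vs) = w (Suc i)"
        using True by (simp_all add: vs_def lens nth_append del: upt_Suc)
      ultimately show ?thesis using cb[OF True] by simp
    next
      case False
      then have im: "i = m" using i lens by simp
      have "bs ! i = (R, t)" using im by (simp add: bs_def nth_append)
      moreover have "vs ! i = w m" "vs ! ((i+1) mod length vs) = w 0"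
        using im by (simp_all add: vs_def lens del: upt_Suc)
      ultimately show ?thesis using wc by simp
    qed
  qed
  ultimately show ?thesis unfolding has_cycle_def using lens m1
    by (intro exI[of _ vs] exI[of _ bs]) auto
qed

lemma KG:
  assumes A: "is_forest ar A" and Rt: "t \<in> snd A R" and j: "j < length t" "l < length t" "j \<noteq> l"
  shows "(t ! j, t ! l) \<notin> (adj (del A R t))\<^sup>*"
proof
  assume "(t ! j, t ! l) \<in> (adj (del A R t))\<^sup>*"
  then obtain w c m where wcm: "w 0 = t ! j" "w m = t ! l" "walk (del A R t) w c m"
    using walk_of_rtrancl by blast
  have "distinct t" using A Rt by (auto simp: is_forest_def no_parallel_def blocks_def)
  then have "t ! j \<noteq> t ! l" using j by (simp add: nth_eq_iff_index_eq)
  then have "has_cycle A" using cycle_from_walk[OF Rt wcm(3)] wcm j by auto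
  then show False using A by (simp add: is_forest_def)
qed



definition restr :: "'r struc \<Rightarrow> nat set \<Rightarrow> 'r struc" where
  "restr A K = (K, \<lambda>R. {t \<in> snd A R. set t \<subseteq> K})"
definition ssize :: "'r struc \<Rightarrow> nat" where "ssize A = card (fst A) + card (blocks A)"

lemma fst_restr[simp]: "fst (restr A K) = K" by (simp add: restr_def)
lemma snd_restr[simp]: "snd (restr A K) R = {t \<in> snd A R. set t \<subseteq> K}" by (simp add: restr_def)

lemma is_struc_restr: "is_struc ar A \<Longrightarrow> K \<subseteq> fst A \<Longrightarrow> is_struc ar (restr A K)"
  unfolding is_struc_def by (auto intro: finite_subset)

lemma forest_restr: "is_forest ar A \<Longrightarrow> K \<subseteq> fst A \<Longrightarrow> is_forest ar (restr A K)"
  by (rule forest_sub[where Z = A]) (auto simp: is_forest_def intro: is_struc_restr)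

lemma forest_restr_del: "is_forest ar A \<Longrightarrow> K \<subseteq> fst A \<Longrightarrow> is_forest ar (restr (del A R t) K)"
  by (rule forest_sub[where Z = A]) (auto simp: is_forest_def snd_del is_struc_def split: if_splits intro: finite_subset)

lemma finite_blocks:
  fixes A :: "('r::finite) struc"
  assumes "is_struc ar A"
  shows "finite (blocks A)"
proof -
  have "blocks A \<subseteq> (\<Union>R. {R} \<times> {t. set t \<subseteq> fst A \<and> length t = ar R})"
    using assms by (auto simp: blocks_def is_struc_def)
  moreover have "finite (\<Union>R. {R} \<times> {t. set t \<subseteq> fst A \<and> length t = ar R})"
    using assms by (auto simp: is_struc_def intro!: finite_lists_length_eq)
  ultimately show ?thesis by (rule finite_subset)
qed

lemma blocks_mono: "(\<And>R. snd B R \<subseteq> snd A R) \<Longrightarrow> blocks B \<subseteq> blocks A"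
  by (auto simp: blocks_def)

lemma adj_sym: "(x, y) \<in> adj A \<Longrightarrow> (y, x) \<in> adj A" by (auto simp: adj_def)

lemma rtrancl_adj_sym: "(x, y) \<in> (adj A)\<^sup>* \<Longrightarrow> (y, x) \<in> (adj A)\<^sup>*"
proof (induction rule: rtrancl_induct)
  case (step y z) then show ?case using adj_sym by (meson converse_rtrancl_into_rtrancl)
qed simp

lemma rtrancl_adj_in: "(x, y) \<in> (adj A)\<^sup>* \<Longrightarrow> closed A \<Longrightarrow> x \<in> fst A \<Longrightarrow> y \<in> fst A"
  by (induction rule: rtrancl_induct) (auto simp: adj_def closed_def)

lemma smap_UNS: "smap f (UNS I g) = UNS I (\<lambda>j. smap f (g j))"
  by (rule struc_eqI) auto

lemma embj_slot: "embj i j r z = embj i j' r' z' \<Longrightarrow> j = j'"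
  by (auto simp: embj_def rj_def split: if_splits)
lemma embj_embI: "embj i j r z \<noteq> embI g z'"
  by (auto simp: embj_def rj_def embI_def)

lemma code_pos[simp]: "0 < code j z" by (simp add: code_def)

lemma sub_single_empty: "A \<subseteq> {a::nat} \<Longrightarrow> a \<notin> A \<Longrightarrow> A = {}" by blast

definition rfp :: "('r \<Rightarrow> nat) \<Rightarrow> 'r struc \<times> nat \<Rightarrow> bool" where
  "rfp ar B \<longleftrightarrow> rooted_forest ar (fst B) (snd B)"

lemma decomp:
  fixes A :: "('r::finite) struc"
  assumes rf: "rooted_forest ar A a"
  shows "(fst A = {a} \<and> smap (\<lambda>_. 0) A = BASE {R. [] \<in> snd A R})
    \<or> (\<exists>P G g \<theta>. rooted_forest ar P a \<and> rooted_forest ar G g \<and> ssize P < ssize A \<and> ssize G < ssize A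
          \<and> inj_on \<theta> (fst A) \<and> \<theta> a = 0 \<and> smap \<theta> A = C3 P a G g)
    \<or> (\<exists>R i Bs \<theta>. i < ar R \<and> (\<forall>j<ar R. rfp ar (Bs j) \<and> ssize (fst (Bs j)) < ssize A)
          \<and> inj_on \<theta> (fst A) \<and> \<theta> a = 0 \<and> smap \<theta> A = EXT ar R i Bs)
    \<or> (\<exists>R i Bs G g \<theta>. i < ar R \<and> (\<forall>j<ar R. rfp ar (Bs j) \<and> ssize (fst (Bs j)) < ssize A)
          \<and> rooted_forest ar G g \<and> ssize G < ssize A
          \<and> inj_on \<theta> (fst A) \<and> \<theta> a = 0 \<and> smap \<theta> A = sun (EXT ar R i Bs) (ISOr G g))"
proof -
  have F: "is_forest ar A" and a: "a \<in> fst A" using rf by (auto simp: rooted_forest_def)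
  have S: "is_struc ar A" using F by (simp add: is_forest_def)
  have cA: "closed A" using S by (rule is_struc_closed)
  have finV: "finite (fst A)" using S by (simp add: is_struc_def)
  have finB: "finite (blocks A)" using S by (rule finite_blocks)
  show ?thesis
  proof (cases "\<exists>R t. t \<in> snd A R \<and> a \<in> set t")
    case False
    note noa = False
    show ?thesis
    proof (cases "fst A = {a}")
      case True
      have "snd A R \<subseteq> {[]}" for R
      proof
        fix t assume t: "t \<in> snd A R"
        then have "set t \<subseteq> {a}" using cA True by (auto simp: closed_def)
        moreover have "a \<notin> set t" using noa t by blast
        ultimately have "set t = {}" by (rule sub_single_empty)
        then show "t \<in> {[]}" by simp
      qed
      then have "smap (\<lambda>_. 0) A = BASE {R. [] \<in> snd A R}"
      proof (intro struc_eqI)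
        show "fst (smap (\<lambda>_. 0) A) = fst (BASE {R. [] \<in> snd A R})" using True by (simp add: BASE_def)
        fix R assume "\<And>R. snd A R \<subseteq> {[]}"
        then have "snd A R = {} \<or> snd A R = {[]}" by (metis subset_singletonD)
        then show "snd (smap (\<lambda>_. 0) A) R = snd (BASE {R. [] \<in> snd A R}) R"
          by (auto simp: BASE_def)
      qed
      then show ?thesis using True by blast
    next
      case False
      then obtain g where g: "g \<in> fst A" "g \<noteq> a" using a by blast
      define P where "P = restr A {a}"
      define G where "G = restr A (fst A - {a})"
      define \<theta> where "\<theta> z = (if z = a then 0 else embI g z)" for z
      have rfP: "rooted_forest ar P a" unfolding P_def rooted_forest_def using forest_restr[OF F] a by auto
      have rfG: "rooted_forest ar G g" unfolding G_def rooted_forest_def using forest_restr[OF F] g by auto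
      have sP: "ssize P < ssize A"
      proof -
        have "card {a} < card (fst A)" using g a finV by (intro psubset_card_mono) auto
        moreover have "card (blocks P) \<le> card (blocks A)"
          by (rule card_mono[OF finB blocks_mono]) (auto simp: P_def)
        ultimately show ?thesis by (simp add: ssize_def P_def)
      qed
      have sG: "ssize G < ssize A"
      proof -
        have "card (fst A - {a}) < card (fst A)" using a finV by (intro psubset_card_mono) auto
        moreover have "card (blocks G) \<le> card (blocks A)"
          by (rule card_mono[OF finB blocks_mono]) (auto simp: G_def)
        ultimately show ?thesis by (simp add: ssize_def G_def)
      qed
      have Aeq: "A = sun P G"
      proof (rule struc_eqI)
        show "fst A = fst (sun P G)" using a by (auto simp: P_def G_def)
        fix R
        have "set t \<subseteq> fst A - {a}" if "t \<in> snd A R" for t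
          using that cA noa by (auto simp: closed_def)
        then show "snd A R = snd (sun P G) R" by (auto simp: P_def G_def)
      qed
      have inj: "inj_on \<theta> (fst A)" by (auto simp: inj_on_def \<theta>_def embI_def)
      have "smap \<theta> A = sun (smap \<theta> P) (smap \<theta> G)" using Aeq smap_sun by metis
      also have "smap \<theta> P = smap (embP a) P"
        by (rule smap_cong) (auto simp: P_def closed_def \<theta>_def embP_def)
      also have "smap \<theta> G = smap (embI g) G"
        by (rule smap_cong) (auto simp: G_def closed_def \<theta>_def)
      finally have "smap \<theta> A = C3 P a G g" by (simp add: C3_def ISOr_def)
      moreover have "\<theta> a = 0" by (simp add: \<theta>_def)
      ultimately show ?thesis using rfP rfG sP sG inj by blast
    qed
  next
    case True
    then obtain R t where Rt: "t \<in> snd A R" "a \<in> set t" by blast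
    have lt: "length t = ar R" and tA: "set t \<subseteq> fst A" using S Rt by (auto simp: is_struc_def)
    obtain i where i: "i < length t" "t ! i = a" using Rt(2) by (auto simp: in_set_conv_nth)
    define k where "k = ar R"
    define A' where "A' = del A R t"
    have cA': "closed A'" using cA by (auto simp: closed_def A'_def snd_del)
    define C where "C j = (adj A')\<^sup>* `` {t ! j}" for j
    have tC: "t ! j \<in> C j" for j by (simp add: C_def)
    have CA: "C j \<subseteq> fst A" if "j < k" for j
    proof
      fix x assume "x \<in> C j"
      then have "(t ! j, x) \<in> (adj A')\<^sup>*" by (simp add: C_def)
      moreover have "t ! j \<in> fst A'" using tA that lt by (auto simp: A'_def k_def)
      ultimately show "x \<in> fst A" using rtrancl_adj_in[OF _ cA'] by (auto simp: A'_def)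
    qed
    have disj: "C j \<inter> C l = {}" if "j < k" "l < k" "j \<noteq> l" for j l
    proof (rule ccontr)
      assume "C j \<inter> C l \<noteq> {}"
      then obtain z where "(t ! j, z) \<in> (adj A')\<^sup>*" "(t ! l, z) \<in> (adj A')\<^sup>*" by (auto simp: C_def)
      then have "(t ! j, t ! l) \<in> (adj A')\<^sup>*" using rtrancl_adj_sym rtrancl_trans by metis
      then show False using KG[OF F Rt(1)] that lt by (auto simp: A'_def k_def)
    qed
    define K where "K = (\<Union>j<k. C j)"
    have aK: "a \<in> K" using i tC lt by (auto simp: K_def k_def)
    have KA: "K \<subseteq> fst A" using CA by (auto simp: K_def)
    define jof where "jof z = (SOME j. j < k \<and> z \<in> C j)" for z
    have jof: "jof z = j" if "j < k" "z \<in> C j" for z j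
    proof -
      have "jof z < k \<and> z \<in> C (jof z)" unfolding jof_def by (rule someI[of _ j]) (use that in auto)
      then show ?thesis using disj that by blast
    qed
    define Bs where "Bs j = (restr A' (C j), t ! j)" for j
    obtain g where g: "fst A - K \<noteq> {} \<Longrightarrow> g \<in> fst A - K" by blast
    define Rest where "Rest = restr A (fst A - K)"
    define \<theta> where "\<theta> z = (if z \<in> K then embj i (jof z) (t ! jof z) z else embI g z)" for z
    have \<theta>C: "\<theta> z = embj i j (t ! j) z" if "j < k" "z \<in> C j" for j z
      using that jof by (auto simp: \<theta>_def K_def)
    have inj: "inj_on \<theta> (fst A)"
    proof (rule inj_onI)
      fix z1 z2 assume z: "z1 \<in> fst A" "z2 \<in> fst A" "\<theta> z1 = \<theta> z2"
      show "z1 = z2"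
      proof (cases "z1 \<in> K")
        case True
        then obtain j1 where j1: "j1 < k" "z1 \<in> C j1" by (auto simp: K_def)
        show ?thesis
        proof (cases "z2 \<in> K")
          case True
          then obtain j2 where j2: "j2 < k" "z2 \<in> C j2" by (auto simp: K_def)
          have "embj i j1 (t ! j1) z1 = embj i j2 (t ! j2) z2" using z \<theta>C j1 j2 by simp
          moreover from this have "j1 = j2" by (rule embj_slot)
          ultimately show ?thesis using inj_embj[of i j1 "t ! j1" UNIV] by (auto dest: injD)
        next
          case False
          then have "\<theta> z2 = embI g z2" by (simp add: \<theta>_def)
          then show ?thesis using z \<theta>C[OF j1] embj_embI by metis
        qed
      next
        case False
        show ?thesis
        proof (cases "z2 \<in> K")
          case True
          then obtain j2 where j2: "j2 < k" "z2 \<in> C j2" by (auto simp: K_def)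
          moreover have "\<theta> z1 = embI g z1" using False by (simp add: \<theta>_def)
          ultimately show ?thesis using z \<theta>C[OF j2] embj_embI by metis
        next
          case False
          then show ?thesis using z \<open>z1 \<notin> K\<close> inj_embI[of g UNIV] by (auto simp: \<theta>_def dest: injD)
        qed
      qed
    qed
    have \<theta>a: "\<theta> a = 0"
    proof -
      have "a \<in> C i" using tC[of i] i by simp
      moreover have "i < k" using i lt by (simp add: k_def)
      ultimately have "\<theta> a = embj i i (t ! i) a" using \<theta>C by blast
      then show ?thesis using i by (simp add: embj_def rj_def)
    qed
    define U where "U = UNS {..<k} (\<lambda>j. fst (Bs j))"
    define BR :: "'r struc" where "BR = (set t, \<lambda>S. if S = R then {t} else {})"
    have tuple_cases: "set u \<subseteq> fst A - K \<or> (\<exists>j<k. set u \<subseteq> C j)"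
      if u: "u \<in> snd A' S" for u S
    proof (cases "set u \<inter> K = {}")
      case True
      have "set u \<subseteq> fst A" using u cA' by (auto simp: closed_def A'_def)
      then show ?thesis using True by auto
    next
      case False
      then obtain x j where x: "x \<in> set u" "j < k" "x \<in> C j" by (auto simp: K_def)
      have "y \<in> C j" if "y \<in> set u" for y
      proof -
        have "(x, y) \<in> adj A'" using u x that by (auto simp: adj_def)
        then show ?thesis using x(3) by (auto simp: C_def)
      qed
      then show ?thesis using x by auto
    qed
    have k1: "0 < k" using i lt by (simp add: k_def)
    have Aeq: "A = sun BR (sun U Rest)"
    proof (rule struc_eqI)
      show "fst A = fst (sun BR (sun U Rest))"
      proof -
        have "fst (sun BR (sun U Rest)) = set t \<union> K \<union> (fst A - K)"
          by (simp add: BR_def U_def Bs_def Rest_def K_def Un_assoc)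
        then show ?thesis using KA tA by blast
      qed
      fix S
      show "snd A S = snd (sun BR (sun U Rest)) S"
      proof
        show "snd A S \<subseteq> snd (sun BR (sun U Rest)) S"
        proof
          fix u assume u: "u \<in> snd A S"
          show "u \<in> snd (sun BR (sun U Rest)) S"
          proof (cases "S = R \<and> u = t")
            case True then show ?thesis by (simp add: BR_def)
          next
            case False
            then have u': "u \<in> snd A' S" using u by (auto simp: A'_def snd_del)
            from tuple_cases[OF u'] show ?thesis
            proof
              assume "set u \<subseteq> fst A - K" then show ?thesis using u by (simp add: Rest_def)
            next
              assume "\<exists>j<k. set u \<subseteq> C j"
              then obtain j where "j < k" "set u \<subseteq> C j" by blast
              then show ?thesis using u' by (auto simp: U_def Bs_def)
            qed
          qed
        qed
        have "snd BR S \<subseteq> snd A S" using Rt by (simp add: BR_def)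
        moreover have "snd U S \<subseteq> snd A S" by (auto simp: U_def Bs_def A'_def snd_del)
        moreover have "snd Rest S \<subseteq> snd A S" by (auto simp: Rest_def)
        ultimately show "snd (sun BR (sun U Rest)) S \<subseteq> snd A S" by simp
      qed
    qed
    have sBR: "smap \<theta> BR = BLK ar R i"
    proof (rule struc_eqI)
      have th: "\<theta> (t ! j) = rj i j" if "j < k" for j
        using \<theta>C[OF that tC] by (simp add: embj_def)
      have "set t = (\<lambda>j. t ! j) ` {..<k}" using lt by (auto simp: in_set_conv_nth k_def)
      then have "\<theta> ` set t = (\<lambda>j. \<theta> (t ! j)) ` {..<k}" by (simp add: image_image)
      also have "\<dots> = rj i ` {..<k}" using th by (intro image_cong) auto
      also have "\<dots> = insert 0 {code (Suc j) 0 | j. j < ar R \<and> j \<noteq> i}"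
      proof
        show "rj i ` {..<k} \<subseteq> insert 0 {code (Suc j) 0 | j. j < ar R \<and> j \<noteq> i}"
          by (auto simp: rj_def k_def)
        have "0 \<in> rj i ` {..<k}" using i lt by (auto simp: rj_def k_def image_iff intro!: bexI[of _ i])
        moreover have "code (Suc j) 0 \<in> rj i ` {..<k}" if "j < ar R" "j \<noteq> i" for j
          using that by (auto simp: rj_def k_def image_iff intro!: bexI[of _ j])
        ultimately show "insert 0 {code (Suc j) 0 | j. j < ar R \<and> j \<noteq> i} \<subseteq> rj i ` {..<k}" by blast
      qed
      finally show "fst (smap \<theta> BR) = fst (BLK ar R i)" by (simp add: BR_def fst_BLK)
      have "map \<theta> t = map (rj i) [0..<ar R]"
        using th lt by (intro nth_equalityI) (auto simp: k_def)
      then show "snd (smap \<theta> BR) S = snd (BLK ar R i) S" for S by (simp add: BR_def snd_BLK)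
    qed
    have sU: "smap \<theta> U = UNS {..<ar R} (EXTf i Bs)"
      unfolding U_def smap_UNS k_def[symmetric]
    proof (rule UNS_cong)
      fix j assume "j \<in> {..<k}"
      then show "smap \<theta> (fst (Bs j)) = EXTf i Bs j"
        unfolding EXTf_def by (intro smap_cong) (auto simp: Bs_def closed_def \<theta>C)
    qed
    have sR: "smap \<theta> Rest = ISOr Rest g"
      unfolding ISOr_def by (intro smap_cong) (auto simp: Rest_def closed_def \<theta>_def)
    have main: "smap \<theta> A = sun (EXT ar R i Bs) (ISOr Rest g)"
      using Aeq sBR sU sR by (metis EXT_def smap_sun sun_assoc)
    have rfB: "\<forall>j<ar R. rfp ar (Bs j) \<and> ssize (fst (Bs j)) < ssize A"
    proof (intro allI impI conjI)
      fix j assume j: "j < ar R"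
      show "rfp ar (Bs j)" unfolding rfp_def Bs_def rooted_forest_def
        using forest_restr_del[OF F CA, of j R t] j tC by (simp add: A'_def k_def)
      have "card (C j) \<le> card (fst A)" using CA j finV by (intro card_mono) (auto simp: k_def)
      moreover have "card (blocks (restr A' (C j))) < card (blocks A)"
      proof (rule psubset_card_mono[OF finB])
        have "blocks (restr A' (C j)) \<subseteq> blocks A'" by (rule blocks_mono) auto
        then have "blocks (restr A' (C j)) \<subseteq> blocks A - {(R, t)}" by (simp add: A'_def blocks_del)
        moreover have "(R, t) \<in> blocks A" using Rt by (simp add: blocks_def)
        ultimately show "blocks (restr A' (C j)) \<subset> blocks A" by blast
      qed
      ultimately show "ssize (fst (Bs j)) < ssize A" by (simp add: ssize_def Bs_def)
    qed
    have iR: "i < ar R" using i lt by simp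
    show ?thesis
    proof (cases "fst A - K = {}")
      case False
      have rfR: "rooted_forest ar Rest g" unfolding Rest_def rooted_forest_def
        using forest_restr[OF F, of "fst A - K"] g False by auto
      have sRs: "ssize Rest < ssize A"
      proof -
        have "card (fst A - K) < card (fst A)" using aK a finV by (intro psubset_card_mono) auto
        moreover have "card (blocks Rest) \<le> card (blocks A)"
          by (rule card_mono[OF finB blocks_mono]) (auto simp: Rest_def)
        ultimately show ?thesis by (simp add: ssize_def Rest_def)
      qed
      show ?thesis using main rfB rfR sRs inj \<theta>a iR by blast
    next
      case True
      have "sun (EXT ar R i Bs) (ISOr Rest g) = EXT ar R i Bs"
      proof (rule struc_eqI)
        show "fst (sun (EXT ar R i Bs) (ISOr Rest g)) = fst (EXT ar R i Bs)"
        proof -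
          have e: "embI g ` (fst A - K) = {}" using True by simp
          show ?thesis unfolding Rest_def ISOr_def fst_sun fst_smap fst_restr e by simp
        qed
        fix S
        have "snd (ISOr Rest g) S \<subseteq> snd (EXT ar R i Bs) S"
        proof
          fix u assume "u \<in> snd (ISOr Rest g) S"
          then obtain v where v: "v \<in> snd A S" "set v \<subseteq> {}" "u = map (embI g) v"
            using True by (auto simp: ISOr_def Rest_def)
          then have "v = []" by simp
          then have "v \<noteq> t" using Rt(2) by auto
          then have "v \<in> snd (fst (Bs 0)) S" using v \<open>v = []\<close> by (auto simp: Bs_def A'_def snd_del)
          then have "map (embj i 0 (snd (Bs 0))) v \<in> snd (EXTf i Bs 0) S" by (simp add: EXTf_def)
          then show "u \<in> snd (EXT ar R i Bs) S" using v \<open>v = []\<close> k1 by (auto simp: EXT_def k_def)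
        qed
        then show "snd (sun (EXT ar R i Bs) (ISOr Rest g)) S = snd (EXT ar R i Bs) S" by auto
      qed
      then have "smap \<theta> A = EXT ar R i Bs" using main by simp
      then have "\<exists>R i Bs \<theta>. i < ar R \<and> (\<forall>j<ar R. rfp ar (Bs j) \<and> ssize (fst (Bs j)) < ssize A)
          \<and> inj_on \<theta> (fst A) \<and> \<theta> a = 0 \<and> smap \<theta> A = EXT ar R i Bs"
        using rfB inj \<theta>a iR by blast
      then show ?thesis by blast
    qed
  qed
qed



lemma my_countable_PiE:
  "finite I \<Longrightarrow> (\<And>i. i \<in> I \<Longrightarrow> countable (F i)) \<Longrightarrow> countable (Pi\<^sub>E I F)"
  by (induct I arbitrary: F rule: finite_induct) (auto simp: PiE_insert_eq)

lemma rf_pt: "rooted_forest ar (pt 0) 0"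
proof -
  have "blocks (pt 0 :: 'r struc) = {}" by (simp add: blocks_def)
  then have "\<not> has_cycle (pt 0 :: 'r struc)" unfolding has_cycle_def
    by (metis Suc_1 list.size(3) not_less_eq_eq set_empty subset_empty zero_le)
  then show ?thesis
    by (simp add: rooted_forest_def is_forest_def is_struc_pt no_parallel_def blocks_def)
qed

definition EMPTY :: "'r set \<Rightarrow> 'r struc" where "EMPTY N = ({}, \<lambda>R. if R \<in> N then {[]} else {})"

definition D1 :: "('r \<Rightarrow> nat) \<Rightarrow> nat \<Rightarrow> ('r \<times> nat \<times> nat list) set" where
  "D1 ar n = {(R, i, ls). i < ar R \<and> length ls = ar R \<and> set ls \<subseteq> {..<n}}"

lemma finite_D1: "finite (D1 (ar :: 'r::finite \<Rightarrow> nat) n)"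
proof -
  have "D1 ar n = (\<Union>R. {R} \<times> {..<ar R} \<times> {ls. set ls \<subseteq> {..<n} \<and> length ls = ar R})"
    by (auto simp: D1_def)
  then show ?thesis by (auto intro!: finite_lists_length_eq)
qed

locale rfam = fam +
  assumes reg: "regular_family ar F"
begin

definition Q where "Q = (\<lambda>(A, a). res A a) ` {(A, a). rooted_forest ar A a}"
definition n where "n = card Q"
definition e where "e = (SOME h. bij_betw h Q {0..<card Q})"
definition lab where "lab B = e (res (fst B) (snd B))"

lemma finQ: "finite Q" using reg by (simp add: regular_family_def Q_def)
lemma bij_e: "bij_betw e Q {0..<n}"
proof -
  have "\<exists>h. bij_betw h Q {0..<card Q}" by (rule ex_bij_betw_finite_nat[OF finQ])
  then show ?thesis unfolding e_def n_def by (rule someI_ex)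
qed
lemma resQ: "rooted_forest ar A a \<Longrightarrow> res A a \<in> Q" by (auto simp: Q_def)
lemma lab_lt: "rfp ar B \<Longrightarrow> lab B < n"
  using bij_e resQ unfolding lab_def rfp_def bij_betw_def by fastforce
lemma e_inj: "q1 \<in> Q \<Longrightarrow> q2 \<in> Q \<Longrightarrow> e q1 = e q2 \<Longrightarrow> q1 = q2"
  using bij_e unfolding bij_betw_def inj_on_def by blast
lemma lab_eq: "rfp ar B \<Longrightarrow> rfp ar B' \<Longrightarrow> lab B = lab B' \<Longrightarrow> res (fst B) (snd B) = res (fst B') (snd B')"
  unfolding lab_def rfp_def using e_inj resQ by blast

definition tab3 where
  "tab3 l = (let X = (SOME X. rfp ar (fst X) \<and> rfp ar (snd X) \<and> lab (fst X) = fst l \<and> lab (snd X) = snd l)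
     in e (res (C3 (fst (fst X)) (snd (fst X)) (fst (snd X)) (snd (snd X))) 0))"
definition tab1 where
  "tab1 k = (case k of (R, i, ls) \<Rightarrow>
     e (res (EXT ar R i (SOME Bs. \<forall>j<ar R. rfp ar (Bs j) \<and> lab (Bs j) = ls ! j)) 0))"
definition tab2 where
  "tab2 k = (case k of ((R, i, ls), l) \<Rightarrow>
     (let X = (SOME X. (\<forall>j<ar R. rfp ar (fst X j) \<and> lab (fst X j) = ls ! j) \<and> rfp ar (snd X) \<and> lab (snd X) = l)
      in e (res (sun (EXT ar R i (fst X)) (ISOr (fst (snd X)) (snd (snd X)))) 0)))"
definition tabB where "tabB N = e (res (BASE N) 0)"
definition Acc where "Acc = {l. \<exists>q\<in>Q. e q = l \<and> (pt 0, 0) \<in> q}"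
definition Emp where "Emp = {N. EMPTY N \<in> F}"

lemma tab3_eq:
  assumes "rooted_forest ar P p" "rooted_forest ar G g"
  shows "tab3 (lab (P, p), lab (G, g)) = e (res (C3 P p G g) 0)"
proof -
  let ?Pr = "\<lambda>X. rfp ar (fst X) \<and> rfp ar (snd X) \<and> lab (fst X) = lab (P, p) \<and> lab (snd X) = lab (G, g)"
  define X where "X = (SOME X. ?Pr X)"
  have "?Pr X" unfolding X_def by (rule someI[of _ "((P, p), (G, g))"]) (use assms in \<open>simp add: rfp_def\<close>)
  then have r1: "res (fst (fst X)) (snd (fst X)) = res P p" and r2: "res (fst (snd X)) (snd (snd X)) = res G g"
    using lab_eq[of "fst X" "(P, p)"] lab_eq[of "snd X" "(G, g)"] assms by (auto simp: rfp_def)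
  have "res (C3 (fst (fst X)) (snd (fst X)) (fst (snd X)) (snd (snd X))) 0 = res (C3 P p G g) 0"
    by (rule cong_C3) (use \<open>?Pr X\<close> assms r1 r2 in \<open>auto simp: rfp_def\<close>)
  moreover have "tab3 (lab (P, p), lab (G, g)) = e (res (C3 (fst (fst X)) (snd (fst X)) (fst (snd X)) (snd (snd X))) 0)"
    unfolding tab3_def Let_def X_def by simp
  ultimately show ?thesis by simp
qed

lemma tab1_eq:
  assumes "\<forall>j<ar R. rfp ar (Bs j)"
  shows "tab1 (R, i, map (\<lambda>j. lab (Bs j)) [0..<ar R]) = e (res (EXT ar R i Bs) 0)"
proof -
  let ?Pr = "\<lambda>Cs. \<forall>j<ar R. rfp ar (Cs j) \<and> lab (Cs j) = map (\<lambda>j. lab (Bs j)) [0..<ar R] ! j"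
  define Cs where "Cs = (SOME Cs. ?Pr Cs)"
  have "?Pr Cs" unfolding Cs_def by (rule someI[of _ Bs]) (use assms in auto)
  then have "res (EXT ar R i Cs) 0 = res (EXT ar R i Bs) 0"
    using assms lab_eq by (intro cong_C1) (auto simp: rfp_def)
  then show ?thesis unfolding tab1_def Cs_def by simp
qed

lemma tab2_eq:
  assumes "\<forall>j<ar R. rfp ar (Bs j)" "rooted_forest ar G g"
  shows "tab2 ((R, i, map (\<lambda>j. lab (Bs j)) [0..<ar R]), lab (G, g)) = e (res (sun (EXT ar R i Bs) (ISOr G g)) 0)"
proof -
  let ?Pr = "\<lambda>X. (\<forall>j<ar R. rfp ar (fst X j) \<and> lab (fst X j) = map (\<lambda>j. lab (Bs j)) [0..<ar R] ! j)
                  \<and> rfp ar (snd X) \<and> lab (snd X) = lab (G, g)"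
  define X where "X = (SOME X. ?Pr X)"
  have "?Pr X" unfolding X_def by (rule someI[of _ "(Bs, (G, g))"]) (use assms in \<open>auto simp: rfp_def\<close>)
  then have "res (sun (EXT ar R i (fst X)) (ISOr (fst (snd X)) (snd (snd X)))) 0 = res (sun (EXT ar R i Bs) (ISOr G g)) 0"
    using assms lab_eq[of "snd X" "(G, g)"] lab_eq
    by (intro cong_C2) (auto simp: rfp_def)
  moreover have "tab2 ((R, i, map (\<lambda>j. lab (Bs j)) [0..<ar R]), lab (G, g)) = e (res (sun (EXT ar R i (fst X)) (ISOr (fst (snd X)) (snd (snd X)))) 0)"
    unfolding tab2_def Let_def X_def by simp
  ultimately show ?thesis by simp
qed

lemma inF_iff:
  assumes rf: "rooted_forest ar A a"
  shows "A \<in> F \<longleftrightarrow> lab (A, a) \<in> Acc"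
proof -
  have cA: "closed A" by (rule rf_closed[OF rf])
  have a: "a \<in> fst A" by (rule rf_root[OF rf])
  have "glue A a (pt 0) 0 = smap (\<lambda>x. 2*x) A"
    using a by (intro struc_eqI) (auto simp: glue_eq)
  moreover have "smap (\<lambda>x. 2*x) A \<in> F \<longleftrightarrow> A \<in> F"
  proof
    assume "A \<in> F" then show "smap (\<lambda>x. 2*x) A \<in> F" by (rule F_smap) (auto simp: inj_on_def)
  next
    assume h: "smap (\<lambda>x. 2*x) A \<in> F"
    have "smap (\<lambda>x. x div 2) (smap (\<lambda>x. 2*x) A) = smap (\<lambda>x. x) A"
      unfolding smap_comp by (rule smap_cong[OF cA]) simp
    moreover have "smap (\<lambda>x. x div 2) (smap (\<lambda>x. 2*x) A) \<in> F"
      by (rule F_smap[OF h]) (auto simp: inj_on_def)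
    ultimately show "A \<in> F" by (simp add: smap_id)
  qed
  ultimately have "A \<in> F \<longleftrightarrow> (pt 0, 0) \<in> res A a" using rf_pt by (auto simp: residual_def)
  also have "\<dots> \<longleftrightarrow> lab (A, a) \<in> Acc"
    using resQ[OF rf] e_inj unfolding Acc_def lab_def by auto
  finally show ?thesis .
qed

definition data where
  "data = (n, restrict tab3 ({..<n} \<times> {..<n}), restrict tab1 (D1 ar n),
           restrict tab2 (D1 ar n \<times> {..<n}), tabB, Acc, Emp)"

end

lemma empty_struc:
  assumes "is_struc ar A" "fst A = {}"
  shows "A = EMPTY {R. [] \<in> snd A R}"
proof (rule struc_eqI)
  show "fst A = fst (EMPTY {R. [] \<in> snd A R})" using assms by (simp add: EMPTY_def)
  fix R
  have "snd A R \<subseteq> {[]}" using assms by (auto simp: is_struc_def)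
  then have "snd A R = {} \<or> snd A R = {[]}" by (metis subset_singletonD)
  then show "snd A R = snd (EMPTY {R. [] \<in> snd A R}) R" by (auto simp: EMPTY_def)
qed

lemma restr_eq: "restrict f A = restrict g A \<Longrightarrow> x \<in> A \<Longrightarrow> f x = g x"
  by (metis restrict_apply')

lemma tup_proj: "(a,b,c,d,e,f,g) = (a',b',c',d',e',f',g') \<Longrightarrow> a = a' \<and> b = b' \<and> c = c' \<and> d = d' \<and> e = e' \<and> f = f' \<and> g = g'"
  by simp

locale fam2 = f1: rfam ar F1 + f2: rfam ar F2 for ar :: "'r::finite \<Rightarrow> nat" and F1 F2 +
  assumes deq: "f1.data = f2.data"
begin

lemma DD: "f1.n = f2.n" "restrict f1.tab3 ({..<f1.n} \<times> {..<f1.n}) = restrict f2.tab3 ({..<f2.n} \<times> {..<f2.n})"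
  "restrict f1.tab1 (D1 ar f1.n) = restrict f2.tab1 (D1 ar f2.n)"
  "restrict f1.tab2 (D1 ar f1.n \<times> {..<f1.n}) = restrict f2.tab2 (D1 ar f2.n \<times> {..<f2.n})"
  "f1.tabB = f2.tabB" "f1.Acc = f2.Acc" "f1.Emp = f2.Emp"
  using tup_proj[OF deq[unfolded f1.data_def f2.data_def]] by blast+

lemma neq: "f1.n = f2.n" by (rule DD(1))

lemma lab_same: "rooted_forest ar A a \<Longrightarrow> f1.lab (A, a) = f2.lab (A, a)"
proof (induction "ssize A" arbitrary: A a rule: less_induct)
  case less
  note rf = less.prems
  have ih: "f1.lab B = f2.lab B" if "rfp ar B" "ssize (fst B) < ssize A" for B
    using less.hyps[of "fst B" "snd B"] that by (simp add: rfp_def)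
  have ra: "f1.res A a = f1.res (smap \<theta> A) 0" "f2.res A a = f2.res (smap \<theta> A) 0"
    if "inj_on \<theta> (fst A)" "\<theta> a = 0" for \<theta>
    using f1.riso_res[OF f1.rf_closed[OF rf] f1.rf_root[OF rf] that(1)]
          f2.riso_res[OF f2.rf_closed[OF rf] f2.rf_root[OF rf] that(1)] that(2) by auto
  from decomp[OF rf] show ?case
  proof (elim disjE exE conjE)
    assume "fst A = {a}" and b: "smap (\<lambda>_. 0) A = BASE {R. [] \<in> snd A R}"
    have "inj_on (\<lambda>_::nat. 0::nat) (fst A)" using \<open>fst A = {a}\<close> by simp
    then have "f1.lab (A, a) = f1.tabB {R. [] \<in> snd A R}" "f2.lab (A, a) = f2.tabB {R. [] \<in> snd A R}"
      using ra[of "\<lambda>_. 0"] b by (auto simp: f1.lab_def f2.lab_def f1.tabB_def f2.tabB_def)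
    moreover have "f1.tabB = f2.tabB" by (rule DD(5))
    ultimately show ?thesis by simp
  next
    fix P G g \<theta>
    assume P: "rooted_forest ar P a" and G: "rooted_forest ar G g" and sP: "ssize P < ssize A"
      and sG: "ssize G < ssize A" and inj: "inj_on \<theta> (fst A)" and t0: "\<theta> a = 0"
      and eq: "smap \<theta> A = C3 P a G g"
    have l: "f1.lab (P, a) = f2.lab (P, a)" "f1.lab (G, g) = f2.lab (G, g)"
      using ih[of "(P, a)"] ih[of "(G, g)"] P G sP sG by (auto simp: rfp_def)
    have lt: "f1.lab (P, a) < f1.n" "f1.lab (G, g) < f1.n"
      using f1.lab_lt P G by (auto simp: rfp_def)
    have "restrict f1.tab3 ({..<f1.n} \<times> {..<f1.n}) = restrict f2.tab3 ({..<f2.n} \<times> {..<f2.n})"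
      by (rule DD(2))
    have mem: "(f1.lab (P, a), f1.lab (G, g)) \<in> {..<f1.n} \<times> {..<f1.n}" using lt by simp
    have "f1.tab3 (f1.lab (P, a), f1.lab (G, g)) = f2.tab3 (f1.lab (P, a), f1.lab (G, g))"
      by (rule restr_eq[OF DD(2)[folded neq] mem])
    then show ?thesis
      using f1.tab3_eq[OF P G] f2.tab3_eq[OF P G] l ra[OF inj t0] eq
      by (simp add: f1.lab_def f2.lab_def)
  next
    fix R i Bs \<theta>
    assume iR: "i < ar R" and B: "\<forall>j<ar R. rfp ar (Bs j) \<and> ssize (fst (Bs j)) < ssize A"
      and inj: "inj_on \<theta> (fst A)" and t0: "\<theta> a = 0" and eq: "smap \<theta> A = EXT ar R i Bs"
    have rB: "\<forall>j<ar R. rfp ar (Bs j)" using B by blast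
    have ls: "map (\<lambda>j. f1.lab (Bs j)) [0..<ar R] = map (\<lambda>j. f2.lab (Bs j)) [0..<ar R]"
      using ih B by simp
    have "\<forall>j<ar R. f1.lab (Bs j) < f1.n" using rB f1.lab_lt by blast
    then have key: "(R, i, map (\<lambda>j. f1.lab (Bs j)) [0..<ar R]) \<in> D1 ar f1.n"
      using iR by (auto simp: D1_def)
    have "f1.tab1 (R, i, map (\<lambda>j. f1.lab (Bs j)) [0..<ar R]) = f2.tab1 (R, i, map (\<lambda>j. f1.lab (Bs j)) [0..<ar R])"
      by (rule restr_eq[OF DD(3)[folded neq] key])
    note T = this
    have "f1.lab (A, a) = f1.e (f1.res (EXT ar R i Bs) 0)"
      using ra[OF inj t0] eq by (simp add: f1.lab_def)
    also have "\<dots> = f1.tab1 (R, i, map (\<lambda>j. f1.lab (Bs j)) [0..<ar R])" using f1.tab1_eq[OF rB] by simp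
    also have "\<dots> = f2.tab1 (R, i, map (\<lambda>j. f2.lab (Bs j)) [0..<ar R])" using T unfolding ls .
    also have "\<dots> = f2.e (f2.res (EXT ar R i Bs) 0)" using f2.tab1_eq[OF rB] by simp
    also have "\<dots> = f2.lab (A, a)" using ra[OF inj t0] eq by (simp add: f2.lab_def)
    finally show ?thesis .
  next
    fix R i Bs G g \<theta>
    assume iR: "i < ar R" and B: "\<forall>j<ar R. rfp ar (Bs j) \<and> ssize (fst (Bs j)) < ssize A"
      and G: "rooted_forest ar G g" and sG: "ssize G < ssize A"
      and inj: "inj_on \<theta> (fst A)" and t0: "\<theta> a = 0" and eq: "smap \<theta> A = sun (EXT ar R i Bs) (ISOr G g)"
    have rB: "\<forall>j<ar R. rfp ar (Bs j)" using B by blast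
    have ls: "map (\<lambda>j. f1.lab (Bs j)) [0..<ar R] = map (\<lambda>j. f2.lab (Bs j)) [0..<ar R]"
      using ih B by simp
    have lG: "f1.lab (G, g) = f2.lab (G, g)" using ih[of "(G, g)"] G sG by (simp add: rfp_def)
    have key: "((R, i, map (\<lambda>j. f1.lab (Bs j)) [0..<ar R]), f1.lab (G, g)) \<in> D1 ar f1.n \<times> {..<f1.n}"
    proof -
      have "\<forall>j<ar R. f1.lab (Bs j) < f1.n" using rB f1.lab_lt by blast
      moreover have "f1.lab (G, g) < f1.n" using G f1.lab_lt by (simp add: rfp_def)
      ultimately show ?thesis using iR by (auto simp: D1_def)
    qed
    have "f1.tab2 ((R, i, map (\<lambda>j. f1.lab (Bs j)) [0..<ar R]), f1.lab (G, g)) =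
               f2.tab2 ((R, i, map (\<lambda>j. f1.lab (Bs j)) [0..<ar R]), f1.lab (G, g))"
      by (rule restr_eq[OF DD(4)[folded neq] key])
    note T = this
    have "f1.lab (A, a) = f1.e (f1.res (sun (EXT ar R i Bs) (ISOr G g)) 0)"
      using ra[OF inj t0] eq by (simp add: f1.lab_def)
    also have "\<dots> = f1.tab2 ((R, i, map (\<lambda>j. f1.lab (Bs j)) [0..<ar R]), f1.lab (G, g))"
      using f1.tab2_eq[OF rB G] by simp
    also have "\<dots> = f2.tab2 ((R, i, map (\<lambda>j. f2.lab (Bs j)) [0..<ar R]), f2.lab (G, g))" using T unfolding ls lG .
    also have "\<dots> = f2.e (f2.res (sun (EXT ar R i Bs) (ISOr G g)) 0)" using f2.tab2_eq[OF rB G] by simp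
    also have "\<dots> = f2.lab (A, a)" using ra[OF inj t0] eq by (simp add: f2.lab_def)
    finally show ?thesis .
  qed
qed

lemma F_same_sub: "X \<in> F1 \<Longrightarrow> X \<in> F2"
proof -
  assume X: "X \<in> F1"
  have Xf: "is_forest ar X" using f1.F_forest[OF X] .
  have accq: "f1.Acc = f2.Acc" "f1.Emp = f2.Emp" by (rule DD(6), rule DD(7))
  show "X \<in> F2"
  proof (cases "fst X = {}")
    case True
    have "is_struc ar X" using Xf by (simp add: is_forest_def)
    then have "X = EMPTY {R. [] \<in> snd X R}" using empty_struc True by blast
    then show ?thesis using X accq unfolding f1.Emp_def f2.Emp_def by (metis mem_Collect_eq)
  next
    case False
    then obtain a where a: "a \<in> fst X" by blast
    then have rf: "rooted_forest ar X a" using Xf by (simp add: rooted_forest_def)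
    show ?thesis using f1.inF_iff[OF rf] f2.inF_iff[OF rf] lab_same[OF rf] accq X by simp
  qed
qed

end


lemma fam2_sym: "fam2 ar F1 F2 \<Longrightarrow> fam2 ar F2 F1"
  unfolding fam2_def fam2_axioms_def by auto

lemma data_inj:
  fixes ar :: "'r::finite \<Rightarrow> nat"
  assumes "forest_family ar F1" "regular_family ar F1" "forest_family ar F2" "regular_family ar F2"
    and "rfam.data ar F1 = rfam.data ar F2"
  shows "F1 = F2"
proof -
  have r1: "rfam ar F1" and r2: "rfam ar F2" using assms
    by (auto simp: rfam_def rfam_axioms_def fam_def)
  have "fam2 ar F1 F2" using r1 r2 assms(5) by (simp add: fam2_def fam2_axioms_def)
  then show ?thesis using fam2.F_same_sub fam2_sym by blast
qed

theorem theorem3p6: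
  fixes ar :: "'r::finite \<Rightarrow> nat"
  shows "countable {F. forest_family ar F \<and> regular_family ar F}"
proof -
  let ?S = "{F. forest_family ar F \<and> regular_family ar F}"
  let ?d = "rfam.data ar"
  define Big where "Big = (\<Union>n::nat. {n} \<times> (Pi\<^sub>E ({..<n} \<times> {..<n}) (\<lambda>_. UNIV :: nat set)) \<times> (Pi\<^sub>E (D1 ar n) (\<lambda>_. UNIV :: nat set))
      \<times> (Pi\<^sub>E (D1 ar n \<times> {..<n}) (\<lambda>_. UNIV :: nat set)) \<times> (UNIV :: ('r set \<Rightarrow> nat) set) \<times> Pow {..<n}
      \<times> (UNIV :: 'r set set set))"
  have "countable (UNIV :: ('r set \<Rightarrow> nat) set)"
    using my_countable_PiE[of "UNIV :: 'r set set" "\<lambda>_. UNIV :: nat set"] by simp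
  note c4 = this
  have c1: "countable (Pi\<^sub>E ({..<n} \<times> {..<n}) (\<lambda>_. UNIV :: nat set))" for n :: nat
    by (rule my_countable_PiE) (auto intro!: finite_cartesian_product finite_lessThan)
  have c2: "countable (Pi\<^sub>E (D1 ar n) (\<lambda>_. UNIV :: nat set))" for n
    by (rule my_countable_PiE) (auto intro: finite_D1)
  have c3: "countable (Pi\<^sub>E (D1 ar n \<times> {..<n}) (\<lambda>_. UNIV :: nat set))" for n
    by (rule my_countable_PiE) (auto intro: finite_D1)
  have c5: "countable (Pow {..<n::nat})" for n by (rule countable_finite) simp
  have c6: "countable (UNIV :: 'r set set set)" by (rule countable_finite) simp
  have cB: "countable Big" unfolding Big_def
    by (intro countable_UN countable_SIGMA c1 c2 c3 c4 c5 c6) auto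
  have "?d ` ?S \<subseteq> Big"
  proof
    fix x assume "x \<in> ?d ` ?S"
    then obtain F where F: "forest_family ar F" "regular_family ar F" "x = ?d F" by blast
    then interpret rfam ar F by (simp add: rfam_def rfam_axioms_def fam_def)
    have "Acc \<subseteq> {..<n}" using bij_e unfolding Acc_def bij_betw_def by auto
    then show "x \<in> Big" unfolding Big_def F(3) data_def by auto
  qed
  then have "countable (?d ` ?S)" using cB countable_subset by blast
  moreover have "inj_on ?d ?S" using data_inj by (intro inj_onI) auto
  ultimately show ?thesis by (rule countable_image_inj_on)
qed


end
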